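(* Let $L_\alpha(x,t)=\partial/\partial x^\alpha-\hbar^{-1}C_\alpha(x,t)$, $\alpha=1,\dots,n$, be pairwise commuting for each $t$ and satisfy, for a fixed $b\in Diag[\hbar^{-1}]$, $$\frac{\partial L_\alpha}{\partial t}=[\varphi(b)_{\le-1},L_\alpha]\quad(\alpha=1,\dots,n).$$ Let $T(x,t)$ be a dressing transformation depending smoothly on $t$, with $T^{-1}L_\alpha T=\partial/\partial x^\alpha+\sum_{k\ge-1}\hbar^kh_{k,\alpha}(x,t)$, $h_{k,\alpha}(x,t)\in Diag$. Then for each $k$ there is a diagonal-matrix-valued function $B_k(x,t)$, independent of $\alpha$, such that $$\frac{\partial h_{k,\alpha}}{\partial t}+\frac{\partial B_k}{\partial x^\alpha}=0\quad\text{for all }\alpha.$$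
   Context: $C_\alpha$ are $Mat(n,\mathbb C)$-valued analytic functions of $x$ in a domain of $\mathbb C^n$ and of $t$; $Diag$: diagonal matrices; $Diag[\hbar^{-1}]$: polynomials in $\hbar^{-1}$ with constant diagonal coefficients. A dressing transformation is an invertible $T\in Mat(n,\mathbb C)[[\hbar]]$ with $T^{-1}L_\alpha T=\partial/\partial x^\alpha+h_\alpha$, $h_\alpha\in\hbar^{-1}Diag[[\hbar]]$ for all $\alpha$; it is assumed to exist and is assumed that the leading terms $h_{-1,\alpha}$, $\alpha=1,\dots,n$, span $Diag$ (as in the semisimple Frobenius setting). $\varphi(b)=TbT^{-1}$. For a Laurent series $v=\sum_lv_l\hbar^l$, $v_{\le k}=\sum_{l\le k}v_l\hbar^l$. Conjugation $T^{-1}(\partial+A)T=\partial+T^{-1}\partial T+T^{-1}AT$; $[\partial+A,M]=\partial M+[A,M]$. *)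

theory Defs
  imports "HOL-Analysis.Analysis"
begin

text \<open>Matrix-valued coefficient functions of (x,t), x in complex^n, t complex;
  formal Laurent series in hbar are represented by their coefficient maps int => coefficient.\<close>

type_synonym 'n mfun = "complex^'n \<Rightarrow> complex \<Rightarrow> complex^'n^'n"
type_synonym 'n ser = "int \<Rightarrow> 'n mfun"

definition diag_mat :: "complex^'n^'n \<Rightarrow> bool" where
  "diag_mat M \<longleftrightarrow> (\<forall>i j. i \<noteq> j \<longrightarrow> M$i$j = 0)"

definition cscale :: "complex \<Rightarrow> complex^'n^'n \<Rightarrow> complex^'n^'n" where
  "cscale c M = (\<chi> i j. c * M$i$j)"

definition upd :: "complex^'n \<Rightarrow> 'n \<Rightarrow> complex \<Rightarrow> complex^'n" where
  "upd x a s = (\<chi> k. if k = a then s else x$k)"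

text \<open>Holomorphy in several complex variables (Osgood): continuous and holomorphic in each
  variable separately.\<close>
definition holo_on :: "((complex^'n) \<times> complex) set \<Rightarrow> (complex^'n \<Rightarrow> complex \<Rightarrow> complex) \<Rightarrow> bool" where
  "holo_on \<Omega> g \<longleftrightarrow> continuous_on \<Omega> (\<lambda>p. g (fst p) (snd p)) \<and>
     (\<forall>x t. (x,t) \<in> \<Omega> \<longrightarrow>
        (\<forall>a. (\<lambda>s. g (upd x a s) t) field_differentiable (at (x$a))) \<and>
        (\<lambda>s. g x s) field_differentiable (at t))"

definition mholo_on :: "((complex^'n) \<times> complex) set \<Rightarrow> 'n mfun \<Rightarrow> bool" where
  "mholo_on \<Omega> f \<longleftrightarrow> (\<forall>i j. holo_on \<Omega> (\<lambda>x t. f x t $ i $ j))"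

definition px :: "'n::finite \<Rightarrow> 'n mfun \<Rightarrow> 'n mfun" where
  "px a f x t = (\<chi> i j. deriv (\<lambda>s. f (upd x a s) t $ i $ j) (x$a))"

definition pt :: "('n::finite) mfun \<Rightarrow> 'n mfun" where
  "pt f x t = (\<chi> i j. deriv (\<lambda>s. f x s $ i $ j) t)"

definition spx :: "'n::finite \<Rightarrow> 'n ser \<Rightarrow> 'n ser" where
  "spx a A k = px a (A k)"

definition spt :: "('n::finite) ser \<Rightarrow> 'n ser" where
  "spt A k = pt (A k)"

text \<open>Product of Laurent series (Cauchy product; finite for series bounded below).\<close>
definition smult :: "('n::finite) ser \<Rightarrow> 'n ser \<Rightarrow> 'n ser" where
  "smult A B k x t =
     (\<Sum>i\<in>{i. A i \<noteq> (\<lambda>_ _. 0) \<and> B (k - i) \<noteq> (\<lambda>_ _. 0)}. A i x t ** B (k - i) x t)"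

definition sone :: "('n::finite) ser" where
  "sone k = (if k = 0 then (\<lambda>_ _. mat 1) else (\<lambda>_ _. 0))"

definition scomm :: "('n::finite) ser \<Rightarrow> 'n ser \<Rightarrow> 'n ser" where
  "scomm A B k x t = smult A B k x t - smult B A k x t"

text \<open>Commutator of the operators d/dx^a + A and d/dx^c + B, as a multiplication operator:
  d_a B - d_c A + [A,B].\<close>
definition conn_comm :: "'n::finite \<Rightarrow> 'n ser \<Rightarrow> 'n \<Rightarrow> 'n ser \<Rightarrow> 'n ser" where
  "conn_comm a A c B k x t = spx a B k x t - spx c A k x t + scomm A B k x t"

end

theory Submission
  imports Defs "HOL-Complex_Analysis.Cauchy_Integral_Formula"
begin


definition cgam :: "complex \<Rightarrow> real \<Rightarrow> real \<Rightarrow> complex" where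
  "cgam c R u = c + of_real R * exp (2 * of_real pi * \<i> * of_real u)"
definition cvd :: "real \<Rightarrow> real \<Rightarrow> complex" where
  "cvd R u = 2 * of_real pi * \<i> * of_real R * exp (2 * of_real pi * \<i> * of_real u)"

lemma circ_int: "contour_integral (circlepath c R) f = integral {0..1} (\<lambda>u. f (cgam c R u) * cvd R u)"
  unfolding contour_integral_integral vector_derivative_circlepath by (simp add: circlepath cgam_def cvd_def)

lemma cgam_dist: "0 \<le> R \<Longrightarrow> dist (cgam c R u) c = R"
  by (simp add: cgam_def dist_norm norm_mult)

lemma cgam_dist': "0 \<le> R \<Longrightarrow> dist c (cgam c R u) = R"
  using cgam_dist by (simp add: dist_commute)

lemma cont_cgam[continuous_intros]: "continuous_on S f \<Longrightarrow> continuous_on S (\<lambda>x. cgam c R (f x))"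
  unfolding cgam_def by (intro continuous_intros)
lemma cont_cvd[continuous_intros]: "continuous_on S f \<Longrightarrow> continuous_on S (\<lambda>x. cvd R (f x))"
  unfolding cvd_def by (intro continuous_intros)

lemma cauchy_deriv:
  assumes "continuous_on (cball c R) f" "f holomorphic_on ball c R" "w \<in> ball c R"
  shows "deriv f w = integral {0..1} (\<lambda>u. f (cgam c R u) / (cgam c R u - w)^2 * cvd R u) / (2 * of_real pi * \<i>)"
proof -
  have "((\<lambda>u. f u / (u - w) ^ Suc 1) has_contour_integral
        complex_of_real (2 * pi) * \<i> / fact 1 * (deriv ^^ 1) f w) (circlepath c R)"
    by (rule Cauchy_has_contour_integral_higher_derivative_circlepath[OF assms])
  then have "contour_integral (circlepath c R) (\<lambda>u. f u / (u - w) ^ 2) = 2 * of_real pi * \<i> * deriv f w"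
    using contour_integral_unique by (simp add: numeral_2_eq_2)
  then show ?thesis by (simp add: circ_int)
qed

lemma dcont:
  fixes G :: "'p::topological_space \<Rightarrow> complex \<Rightarrow> complex"
  assumes cont: "continuous_on (P \<times> cball c R) (\<lambda>(q,z). G q z)"
    and hol: "\<And>q. q \<in> P \<Longrightarrow> G q holomorphic_on ball c R"
    and R: "0 < R"
  shows "continuous_on (P \<times> ball c (R/2)) (\<lambda>(q,w). deriv (G q) w)"
proof -
  let ?K = "\<lambda>(q,w) u. G q (cgam c R u) / (cgam c R u - w)^2 * cvd R u"
  have eq: "deriv (G q) w = integral (cbox 0 1) (?K (q,w)) / (2 * of_real pi * \<i>)"
    if "q \<in> P" "w \<in> ball c (R/2)" for q w
  proof -
    have "continuous_on (cball c R) (G q)"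
      by (rule continuous_on_compose2[OF cont, where f="\<lambda>z. (q,z)", simplified])
         (auto intro!: continuous_intros simp: that)
    moreover have "w \<in> ball c R" using that R by auto
    ultimately show ?thesis using cauchy_deriv[of c R "G q" w] hol[OF that(1)] by simp
  qed
  have c1: "continuous_on ((P \<times> ball c (R/2)) \<times> cbox 0 1) (\<lambda>(qw, u). ?K qw u)"
  proof -
    have g: "continuous_on ((P \<times> ball c (R/2)) \<times> cbox 0 1) (\<lambda>x. G (fst (fst x)) (cgam c R (snd x)))"
      by (rule continuous_on_compose2[OF cont, where f="\<lambda>x. (fst (fst x), cgam c R (snd x))", simplified])
         (auto intro!: continuous_intros simp: cgam_dist' R less_imp_le)
    have nz: "cgam c R (snd x) - snd (fst x) \<noteq> 0" if "x \<in> (P \<times> ball c (R/2)) \<times> cbox 0 1" for x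
    proof
      assume "cgam c R (snd x) - snd (fst x) = 0"
      then have "dist (cgam c R (snd x)) c = dist (snd (fst x)) c" by simp
      moreover have "dist (snd (fst x)) c < R/2" using that by (auto simp: dist_commute)
      ultimately show False using cgam_dist[of R c "snd x"] R by simp
    qed
    have "continuous_on ((P \<times> ball c (R/2)) \<times> cbox 0 1)
      (\<lambda>x. G (fst (fst x)) (cgam c R (snd x)) / (cgam c R (snd x) - snd (fst x))^2 * cvd R (snd x))"
      by (intro continuous_intros g) (use nz in auto)
    then show ?thesis by (simp add: split_beta case_prod_beta)
  qed
  have "continuous_on (P \<times> ball c (R/2)) (\<lambda>qw. integral (cbox 0 1) (?K qw) / (2 * of_real pi * \<i>))"
    by (intro continuous_intros integral_continuous_on_param c1) auto
  then show ?thesis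
    by (rule continuous_on_eq) (auto simp: eq)
qed

lemma cont_swap:
  assumes "continuous_on (A \<times> B) (\<lambda>(x,y). f x y)"
  shows "continuous_on (B \<times> A) (\<lambda>(y,x). f x y)"
proof -
  have "continuous_on (B \<times> A) ((\<lambda>(x,y). f x y) \<circ> (\<lambda>p. (snd p, fst p)))"
    by (rule continuous_on_compose[OF _ continuous_on_subset[OF assms]]) (auto intro!: continuous_intros)
  then show ?thesis by (simp add: o_def case_prod_beta)
qed

lemma lemA:
  fixes F :: "complex \<Rightarrow> complex \<Rightarrow> complex"
  assumes cont: "continuous_on (cball z0 R \<times> cball s0 R) (\<lambda>(z,s). F z s)"
    and hs: "\<And>z. z \<in> cball z0 R \<Longrightarrow> F z holomorphic_on ball s0 R"
    and hz: "\<And>s. s \<in> cball s0 R \<Longrightarrow> (\<lambda>z. F z s) holomorphic_on ball z0 R"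
    and R: "0 < R" and r: "0 < r" "r \<le> R"
  shows "((\<lambda>z. deriv (F z) s0) has_field_derivative
     integral {0..1} (\<lambda>u. deriv (\<lambda>z. F z (cgam s0 r u)) z0 / (cgam s0 r u - s0)^2 * cvd r u)
       / (2 * of_real pi * \<i>)) (at z0)"
proof -
  define U where "U = ball z0 (R/2)"
  have U: "open U" "convex U" "z0 \<in> U" "U \<subseteq> ball z0 R" "U \<subseteq> cball z0 R"
    using R by (auto simp: U_def)
  have sph: "cgam s0 r u \<in> cball s0 R" for u
    using cgam_dist'[of r s0 u] r by simp
  have nz: "cgam s0 r u - s0 \<noteq> 0" for u
    using cgam_dist'[of r s0 u] r by (auto simp: dist_norm)
  have nzsq: "(cgam s0 r u - s0)^2 \<noteq> 0" for u
    using nz[of u] by (rule power_not_zero)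
  have nz2: "cgam s0 r u \<noteq> s0" for u
    using nz[of u] by simp
  have eq: "deriv (F z) s0 = integral (cbox 0 1) (\<lambda>u. F z (cgam s0 r u) / (cgam s0 r u - s0)^2 * cvd r u) / (2 * of_real pi * \<i>)"
    if "z \<in> U" for z
  proof -
    have "continuous_on (cball s0 r) (F z)"
      by (rule continuous_on_compose2[OF cont, where f="\<lambda>s. (z,s)", simplified])
         (use that U r in \<open>auto intro!: continuous_intros\<close>)
    moreover have "F z holomorphic_on ball s0 r"
      by (rule holomorphic_on_subset[OF hs]) (use that U r in auto)
    ultimately show ?thesis using cauchy_deriv[of s0 r "F z" s0] r by simp
  qed
  have dc: "continuous_on (cball s0 R \<times> ball z0 (R/2)) (\<lambda>(\<sigma>,w). deriv (\<lambda>z. F z \<sigma>) w)"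
  proof (rule dcont[where G="\<lambda>\<sigma> z. F z \<sigma>", OF _ hz R])
    show "continuous_on (cball s0 R \<times> cball z0 R) (\<lambda>(q, z). F z q)"
      by (rule cont_swap[OF cont])
  qed
  have "((\<lambda>z. integral (cbox 0 1) (\<lambda>u. F z (cgam s0 r u) / (cgam s0 r u - s0)^2 * cvd r u)) has_field_derivative
      integral (cbox 0 1) (\<lambda>u. deriv (\<lambda>z. F z (cgam s0 r u)) z0 / (cgam s0 r u - s0)^2 * cvd r u)) (at z0 within U)"
  proof (rule leibniz_rule_field_derivative[OF _ _ _ U(3,2)])
    fix z :: complex and u :: real
    assume z: "z \<in> U" and u: "u \<in> cbox 0 1"
    have "((\<lambda>z. F z (cgam s0 r u)) has_field_derivative deriv (\<lambda>z. F z (cgam s0 r u)) z) (at z within U)"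
      by (rule holomorphic_derivI[OF hz[OF sph] _]) (use z U in auto)
    then show "((\<lambda>z. F z (cgam s0 r u) / (cgam s0 r u - s0)^2 * cvd r u) has_field_derivative
        deriv (\<lambda>z. F z (cgam s0 r u)) z / (cgam s0 r u - s0)^2 * cvd r u) (at z within U)"
      by (intro DERIV_cmult_right DERIV_cdivide)
  next
    fix z assume z: "z \<in> U"
    have "continuous_on (cbox 0 1) (\<lambda>u. F z (cgam s0 r u) / (cgam s0 r u - s0)^2 * cvd r u)"
    proof -
      have "continuous_on (cbox 0 1) (\<lambda>u. F z (cgam s0 r u))"
        by (rule continuous_on_compose2[OF cont, where f="\<lambda>u. (z, cgam s0 r u)", simplified])
           (use z U sph in \<open>auto intro!: continuous_intros\<close>)
      then show ?thesis by (intro continuous_intros) (auto simp: nz2)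
    qed
    then show "(\<lambda>u. F z (cgam s0 r u) / (cgam s0 r u - s0)^2 * cvd r u) integrable_on cbox 0 1"
      by (rule integrable_continuous)
  next
    have "continuous_on (U \<times> cbox 0 1) (\<lambda>x. deriv (\<lambda>z. F z (cgam s0 r (snd x))) (fst x))"
      by (rule continuous_on_compose2[OF dc, where f="\<lambda>x. (cgam s0 r (snd x), fst x)", simplified])
         (use sph in \<open>auto intro!: continuous_intros simp: U_def\<close>)
    then have "continuous_on (U \<times> cbox 0 1) (\<lambda>x. deriv (\<lambda>z. F z (cgam s0 r (snd x))) (fst x) / (cgam s0 r (snd x) - s0)^2 * cvd r (snd x))"
      by (intro continuous_intros) (auto simp: nz2)
    then show "continuous_on (U \<times> cbox 0 1) (\<lambda>(z, u). deriv (\<lambda>z. F z (cgam s0 r u)) z / (cgam s0 r u - s0)^2 * cvd r u)"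
      by (simp add: case_prod_beta)
  qed
  then have "((\<lambda>z. integral (cbox 0 1) (\<lambda>u. F z (cgam s0 r u) / (cgam s0 r u - s0)^2 * cvd r u)) has_field_derivative
      integral (cbox 0 1) (\<lambda>u. deriv (\<lambda>z. F z (cgam s0 r u)) z0 / (cgam s0 r u - s0)^2 * cvd r u)) (at z0)"
    by (simp only: at_within_open[OF U(3) U(1)])
  then have "((\<lambda>z. integral (cbox 0 1) (\<lambda>u. F z (cgam s0 r u) / (cgam s0 r u - s0)^2 * cvd r u) / (2 * of_real pi * \<i>)) has_field_derivative
      integral (cbox 0 1) (\<lambda>u. deriv (\<lambda>z. F z (cgam s0 r u)) z0 / (cgam s0 r u - s0)^2 * cvd r u) / (2 * of_real pi * \<i>)) (at z0)"
    by (rule DERIV_cdivide)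
  then show ?thesis unfolding cbox_interval[symmetric]
    by (rule has_field_derivative_transform_within_open[OF _ U(1,3)]) (simp add: eq)
qed

lemma lemB:
  fixes F :: "complex \<Rightarrow> complex \<Rightarrow> complex"
  assumes cont: "continuous_on (cball z0 R \<times> cball s0 R) (\<lambda>(z,s). F z s)"
    and hs: "\<And>z. z \<in> cball z0 R \<Longrightarrow> F z holomorphic_on ball s0 R"
    and hz: "\<And>s. s \<in> cball s0 R \<Longrightarrow> (\<lambda>z. F z s) holomorphic_on ball z0 R"
    and R: "0 < R"
  shows "((\<lambda>z. deriv (F z) s0) has_field_derivative deriv (\<lambda>\<sigma>. deriv (\<lambda>z. F z \<sigma>) z0) s0) (at z0)"
proof -
  define H where "H = (\<lambda>\<sigma>. deriv (\<lambda>z. F z \<sigma>) z0)"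
  have Hd: "H field_differentiable at \<sigma>" if "\<sigma> \<in> ball s0 (R/2)" for \<sigma>
  proof -
    have sub1: "cball \<sigma> (R/2) \<subseteq> cball s0 R" "ball \<sigma> (R/2) \<subseteq> ball s0 R"
    proof safe
      fix x assume "x \<in> cball \<sigma> (R/2)"
      then show "x \<in> cball s0 R" using that dist_triangle[of x s0 \<sigma>] by (auto simp: dist_commute)
    next
      fix x assume "x \<in> ball \<sigma> (R/2)"
      then show "x \<in> ball s0 R" using that dist_triangle[of x s0 \<sigma>] by (auto simp: dist_commute)
    qed
    have sub2: "cball z0 (R/2) \<subseteq> cball z0 R" "ball z0 (R/2) \<subseteq> ball z0 R" using R by auto
    have c2: "continuous_on (cball \<sigma> (R/2) \<times> cball z0 (R/2)) (\<lambda>(s,z). F z s)"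
      by (rule continuous_on_subset[OF cont_swap[OF cont]]) (use sub1 sub2 in auto)
    have h1: "(\<lambda>z. F z s) holomorphic_on ball z0 (R/2)" if "s \<in> cball \<sigma> (R/2)" for s
      using hz[of s] sub1 sub2 that by (meson holomorphic_on_subset subsetD)
    have h2: "F z holomorphic_on ball \<sigma> (R/2)" if "z \<in> cball z0 (R/2)" for z
      using hs[of z] sub1 sub2 that by (meson holomorphic_on_subset subsetD)
    have "\<exists>D. ((\<lambda>s. deriv (\<lambda>z. F z s) z0) has_field_derivative D) (at \<sigma>)"
      by (rule exI, rule lemA[where F="\<lambda>s z. F z s" and R="R/2" and r="R/2", OF c2 h1 h2]) (use R in auto)
    then show ?thesis unfolding H_def field_differentiable_def by blast
  qed
  have Hh: "H holomorphic_on ball s0 (R/2)"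
    using Hd by (auto simp: holomorphic_on_def intro: field_differentiable_at_within)
  have Hh4: "H holomorphic_on ball s0 (R/4)"
    by (rule holomorphic_on_subset[OF Hh]) (use R in auto)
  have Hc: "continuous_on (cball s0 (R/4)) H"
    by (rule holomorphic_on_imp_continuous_on[OF holomorphic_on_subset[OF Hh]]) (use R in auto)
  have "deriv H s0 = integral {0..1} (\<lambda>u. H (cgam s0 (R/4) u) / (cgam s0 (R/4) u - s0)^2 * cvd (R/4) u) / (2 * of_real pi * \<i>)"
    by (rule cauchy_deriv[OF Hc Hh4]) (use R in auto)
  moreover have "((\<lambda>z. deriv (F z) s0) has_field_derivative
     integral {0..1} (\<lambda>u. H (cgam s0 (R/4) u) / (cgam s0 (R/4) u - s0)^2 * cvd (R/4) u)
       / (2 * of_real pi * \<i>)) (at z0)"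
    unfolding H_def by (rule lemA[OF cont hs hz R]) (use R in auto)
  ultimately show ?thesis by (simp add: H_def)
qed


definition updp :: "((complex^'n) \<times> complex) \<Rightarrow> 'n option \<Rightarrow> complex \<Rightarrow> ((complex^'n) \<times> complex)" where
  "updp p d s = (case d of None \<Rightarrow> (fst p, s) | Some a \<Rightarrow> (upd (fst p) a s, snd p))"

definition coord :: "((complex^'n) \<times> complex) \<Rightarrow> 'n option \<Rightarrow> complex" where
  "coord p d = (case d of None \<Rightarrow> snd p | Some a \<Rightarrow> fst p $ a)"

lemma coord_updp_same[simp]: "coord (updp p d s) d = s"
  by (cases d) (auto simp: coord_def updp_def upd_def)

lemma updp_updp_same[simp]: "updp (updp p d s) d s' = updp p d s'"
  by (cases d) (auto simp: updp_def upd_def vec_eq_iff)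

lemma coord_updp_other: "d \<noteq> e \<Longrightarrow> coord (updp p e s) d = coord p d"
  by (cases d; cases e) (auto simp: coord_def updp_def upd_def)

lemma updp_comm: "d \<noteq> e \<Longrightarrow> updp (updp p e s) d s' = updp (updp p d s') e s"
  by (cases d; cases e) (auto simp: updp_def upd_def vec_eq_iff)

lemma updp_coord[simp]: "updp p d (coord p d) = p"
proof (cases d)
  case (Some a)
  have "(\<chi> k. if k = a then fst p $ a else fst p $ k) = fst p" by (simp add: vec_eq_iff)
  then show ?thesis using Some by (simp add: coord_def updp_def upd_def)
qed (simp add: coord_def updp_def)

lemma norm_single:
  fixes c :: complex
  shows "norm ((\<chi> k. if k = a then c else 0) :: complex^'n::finite) = norm c"
proof -
  have "norm ((\<chi> k. if k = a then c else 0) :: complex^'n) = sqrt (\<Sum>i\<in>UNIV. (norm (if i = a then c else 0))^2)"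
    by (simp add: norm_vec_def L2_set_def)
  also have "(\<Sum>i\<in>UNIV. (norm (if i = a then c else 0))^2) = (norm c)^2"
  proof -
    have "\<And>i. (norm (if i = a then c else 0))^2 = (if i = a then (norm c)^2 else 0)" by simp
    then show ?thesis by (simp only: sum.delta) simp
  qed
  finally show ?thesis by simp
qed

lemma dist_updp: "dist (updp p d s) (updp p d s') = dist s s'"
proof (cases d)
  case None then show ?thesis by (simp add: updp_def dist_Pair_Pair)
next
  case (Some a)
  have "upd (fst p) a s - upd (fst p) a s' = (\<chi> k. if k = a then s - s' else 0)"
    by (simp add: upd_def vec_eq_iff)
  then have "dist (upd (fst p) a s) (upd (fst p) a s') = dist s s'"
    by (simp add: dist_norm norm_single)
  then show ?thesis using Some by (simp add: updp_def dist_Pair_Pair)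
qed

lemma dist_updp_self: "dist (updp p d s) p = dist s (coord p d)"
  using dist_updp[of p d s "coord p d"] by simp

lemma dist_coord: "dist (coord q d) (coord p d) \<le> dist q p"
proof (cases d)
  case None then show ?thesis by (simp add: coord_def dist_snd_le)
next
  case (Some a)
  have "dist (fst q $ a) (fst p $ a) \<le> dist (fst q) (fst p)"
  proof -
    have "norm ((fst q - fst p) $ a) \<le> norm (fst q - fst p)" by (rule Finite_Cartesian_Product.norm_nth_le)
    then show ?thesis by (simp add: dist_norm)
  qed
  also have "\<dots> \<le> dist q p" by (rule dist_fst_le)
  finally show ?thesis using Some by (simp add: coord_def)
qed

lemma cont_updp[continuous_intros]:
  "continuous_on S f \<Longrightarrow> continuous_on S g \<Longrightarrow> continuous_on S (\<lambda>x. updp (f x) d (g x))"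
proof (cases d)
  case (Some a)
  assume f: "continuous_on S f" and g: "continuous_on S g"
  have "continuous_on S (\<lambda>x. if k = a then g x else fst (f x) $ k)" for k
    by (cases "k = a") (auto intro!: continuous_intros f g)
  then show ?thesis using Some f g unfolding updp_def upd_def
    by (auto intro!: continuous_intros continuous_on_vec_lambda)
qed (auto simp: updp_def intro!: continuous_intros)

lemma cont_coord[continuous_intros]:
  "continuous_on S f \<Longrightarrow> continuous_on S (\<lambda>x. coord (f x) d)"
  unfolding coord_def
  by (cases d) (auto intro!: continuous_intros)


definition hol :: "((complex^'n::finite) \<times> complex) set \<Rightarrow> (((complex^'n) \<times> complex) \<Rightarrow> complex) \<Rightarrow> bool" where
  "hol \<Omega> g \<longleftrightarrow> continuous_on \<Omega> g \<and>
     (\<forall>p\<in>\<Omega>. \<forall>d. (\<lambda>s. g (updp p d s)) field_differentiable (at (coord p d)))"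

definition dd :: "'n option \<Rightarrow> (((complex^'n::finite) \<times> complex) \<Rightarrow> complex) \<Rightarrow> ((complex^'n) \<times> complex) \<Rightarrow> complex" where
  "dd d g p = deriv (\<lambda>s. g (updp p d s)) (coord p d)"

lemma hol_hasderiv:
  "hol \<Omega> g \<Longrightarrow> p \<in> \<Omega> \<Longrightarrow> ((\<lambda>s. g (updp p d s)) has_field_derivative dd d g p) (at (coord p d))"
  unfolding hol_def dd_def using DERIV_deriv_iff_field_differentiable by blast

lemma slice_open: "open \<Omega> \<Longrightarrow> open {s. updp p d s \<in> \<Omega>}"
proof -
  assume "open \<Omega>"
  moreover have "continuous_on UNIV (\<lambda>s. updp p d s)" by (intro continuous_intros)
  ultimately have "open ((\<lambda>s. updp p d s) -` \<Omega>)" by (rule open_vimage)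
  then show ?thesis by (simp add: vimage_def)
qed

lemma slice_holo:
  assumes "hol \<Omega> g"
  shows "(\<lambda>s. g (updp p d s)) holomorphic_on {s. updp p d s \<in> \<Omega>}"
  unfolding holomorphic_on_def
proof
  fix s assume "s \<in> {s. updp p d s \<in> \<Omega>}"
  moreover have "\<forall>p\<in>\<Omega>. \<forall>d. (\<lambda>s. g (updp p d s)) field_differentiable (at (coord p d))"
    using assms by (auto simp: hol_def)
  ultimately have "(\<lambda>s'. g (updp (updp p d s) d s')) field_differentiable (at (coord (updp p d s) d))"
    by blast
  then show "(\<lambda>s. g (updp p d s)) field_differentiable at s within {s. updp p d s \<in> \<Omega>}"
    by (auto intro: field_differentiable_at_within)
qed

lemma dd_cong:
  assumes "open \<Omega>" "p \<in> \<Omega>" "\<And>q. q \<in> \<Omega> \<Longrightarrow> f q = g q"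
  shows "dd d f p = dd d g p"
  unfolding dd_def
proof (rule deriv_cong_ev)
  have "eventually (\<lambda>s. s \<in> {s. updp p d s \<in> \<Omega>}) (nhds (coord p d))"
    by (rule eventually_nhds_in_open[OF slice_open[OF assms(1)]]) (use assms in simp)
  then show "\<forall>\<^sub>F x in nhds (coord p d). f (updp p d x) = g (updp p d x)"
    by eventually_elim (use assms(3) in auto)
qed simp

lemma hol_cong:
  assumes "open \<Omega>" "hol \<Omega> g" "\<And>q. q \<in> \<Omega> \<Longrightarrow> f q = g q"
  shows "hol \<Omega> f"
  unfolding hol_def
proof safe
  show "continuous_on \<Omega> f" using assms(2,3) by (auto simp: hol_def cong: continuous_on_cong)
next
  fix p d assume p: "p \<in> \<Omega>"
  have "((\<lambda>s. f (updp p d s)) has_field_derivative dd d g p) (at (coord p d))"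
    by (rule has_field_derivative_transform_within_open[OF hol_hasderiv[OF assms(2) p] slice_open[OF assms(1), of p d]])
       (use p assms(3) in auto)
  then show "(\<lambda>s. f (updp p d s)) field_differentiable at (coord p d)"
    by (auto simp: field_differentiable_def)
qed

lemma hol_const: "hol \<Omega> (\<lambda>_. c)"
  by (auto simp: hol_def intro: continuous_intros)

lemma hol_add: "hol \<Omega> f \<Longrightarrow> hol \<Omega> g \<Longrightarrow> hol \<Omega> (\<lambda>q. f q + g q)"
  by (auto simp: hol_def intro!: continuous_intros Derivative.field_differentiable_add)

lemma hol_mult: "hol \<Omega> f \<Longrightarrow> hol \<Omega> g \<Longrightarrow> hol \<Omega> (\<lambda>q. f q * g q)"
  by (auto simp: hol_def intro!: continuous_intros field_differentiable_mult)

lemma hol_minus: "hol \<Omega> f \<Longrightarrow> hol \<Omega> (\<lambda>q. - f q)"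
  by (auto simp: hol_def intro!: continuous_intros Derivative.field_differentiable_minus)

lemma hol_diff: "hol \<Omega> f \<Longrightarrow> hol \<Omega> g \<Longrightarrow> hol \<Omega> (\<lambda>q. f q - g q)"
  using hol_add[OF _ hol_minus, of \<Omega> f g] by simp

lemma hol_sum: "finite S \<Longrightarrow> (\<And>i. i \<in> S \<Longrightarrow> hol \<Omega> (f i)) \<Longrightarrow> hol \<Omega> (\<lambda>q. \<Sum>i\<in>S. f i q)"
  by (induction S rule: finite_induct) (auto intro: hol_add hol_const)

lemma dd_add: "hol \<Omega> f \<Longrightarrow> hol \<Omega> g \<Longrightarrow> p \<in> \<Omega> \<Longrightarrow> dd d (\<lambda>q. f q + g q) p = dd d f p + dd d g p"
  unfolding dd_def[of d "\<lambda>q. f q + g q"]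
  by (rule DERIV_imp_deriv) (intro Deriv.field_differentiable_add hol_hasderiv)

lemma dd_mult: "hol \<Omega> f \<Longrightarrow> hol \<Omega> g \<Longrightarrow> p \<in> \<Omega> \<Longrightarrow> dd d (\<lambda>q. f q * g q) p = dd d f p * g p + f p * dd d g p"
proof -
  assume a: "hol \<Omega> f" "hol \<Omega> g" "p \<in> \<Omega>"
  have "((\<lambda>s. f (updp p d s) * g (updp p d s)) has_field_derivative
     f (updp p d (coord p d)) * dd d g p + dd d f p * g (updp p d (coord p d))) (at (coord p d))"
    by (rule DERIV_mult'[OF hol_hasderiv[OF a(1,3)] hol_hasderiv[OF a(2,3)]])
  then have "dd d (\<lambda>q. f q * g q) p = f p * dd d g p + dd d f p * g p"
    unfolding dd_def[of d "\<lambda>q. f q * g q"] by (simp add: DERIV_imp_deriv)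
  then show ?thesis by (simp add: add.commute)
qed

lemma dd_minus: "hol \<Omega> f \<Longrightarrow> p \<in> \<Omega> \<Longrightarrow> dd d (\<lambda>q. - f q) p = - dd d f p"
  unfolding dd_def[of d "\<lambda>q. - f q"]
  by (rule DERIV_imp_deriv) (intro Deriv.field_differentiable_minus hol_hasderiv)

lemma dd_diff: "hol \<Omega> f \<Longrightarrow> hol \<Omega> g \<Longrightarrow> p \<in> \<Omega> \<Longrightarrow> dd d (\<lambda>q. f q - g q) p = dd d f p - dd d g p"
  using dd_add[OF _ hol_minus, of \<Omega> f g p d] dd_minus[of \<Omega> g p d] by simp

lemma dd_const: "dd d (\<lambda>_. c) p = 0"
  by (simp add: dd_def)

lemma dd_sum: "finite S \<Longrightarrow> (\<And>i. i \<in> S \<Longrightarrow> hol \<Omega> (f i)) \<Longrightarrow> p \<in> \<Omega> \<Longrightarrow>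
   dd d (\<lambda>q. \<Sum>i\<in>S. f i q) p = (\<Sum>i\<in>S. dd d (f i) p)"
proof (induction S rule: finite_induct)
  case empty then show ?case by (simp add: dd_const)
next
  case (insert x F)
  have "dd d (\<lambda>q. \<Sum>i\<in>insert x F. f i q) p = dd d (\<lambda>q. f x q + (\<Sum>i\<in>F. f i q)) p"
    using insert by simp
  also have "\<dots> = dd d (f x) p + dd d (\<lambda>q. \<Sum>i\<in>F. f i q) p"
    by (rule dd_add) (use insert in \<open>auto intro: hol_sum\<close>)
  finally show ?case using insert by simp
qed


lemma hol_D: "hol \<Omega> g \<Longrightarrow> q \<in> \<Omega> \<Longrightarrow> (\<lambda>s. g (updp q d s)) field_differentiable at (coord q d)"
  by (auto simp: hol_def)

lemma updp3: "e \<noteq> d \<Longrightarrow> updp (updp (updp p e z) d \<sigma>) e z' = updp (updp p e z') d \<sigma>"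
proof -
  assume ed: "e \<noteq> d"
  have "updp (updp p e z) d \<sigma> = updp (updp p d \<sigma>) e z" using updp_comm[of d e p z \<sigma>] ed by simp
  then have "updp (updp (updp p e z) d \<sigma>) e z' = updp (updp p d \<sigma>) e z'" by simp
  also have "\<dots> = updp (updp p e z') d \<sigma>" using updp_comm[of e d p \<sigma> z'] ed by simp
  finally show ?thesis .
qed

lemma coord3: "e \<noteq> d \<Longrightarrow> coord (updp (updp p e z) d \<sigma>) e = z"
  using coord_updp_other[of e d "updp p e z" \<sigma>] by simp

lemma polyB:
  assumes O: "open \<Omega>" and g: "hol \<Omega> g" and p: "p \<in> \<Omega>" and ed: "e \<noteq> d"
  shows "((\<lambda>z. deriv (\<lambda>\<sigma>. g (updp (updp p e z) d \<sigma>)) (coord p d)) has_field_derivative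
           deriv (\<lambda>\<sigma>. deriv (\<lambda>z. g (updp (updp p e z) d \<sigma>)) (coord p e)) (coord p d)) (at (coord p e))"
proof -
  obtain \<epsilon> where \<epsilon>: "\<epsilon> > 0" "ball p \<epsilon> \<subseteq> \<Omega>" using open_contains_ball O p by blast
  define R where "R = \<epsilon>/3"
  have R: "R > 0" using \<epsilon> by (simp add: R_def)
  define F where "F = (\<lambda>z \<sigma>. g (updp (updp p e z) d \<sigma>))"
  have inO: "updp (updp p e z) d \<sigma> \<in> \<Omega>" if "z \<in> cball (coord p e) R" "\<sigma> \<in> cball (coord p d) R" for z \<sigma>
  proof -
    have "dist (updp (updp p e z) d \<sigma>) p \<le> dist (updp (updp p e z) d \<sigma>) (updp p e z) + dist (updp p e z) p"
      by (rule dist_triangle)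
    also have "\<dots> = dist \<sigma> (coord p d) + dist z (coord p e)"
      using ed by (simp add: dist_updp_self coord_updp_other)
    also have "\<dots> \<le> 2*R" using that by (simp add: dist_commute)
    finally have "dist p (updp (updp p e z) d \<sigma>) < \<epsilon>" using \<epsilon> R_def by (simp add: dist_commute)
    then show ?thesis using \<epsilon>(2) by auto
  qed
  have cont: "continuous_on (cball (coord p e) R \<times> cball (coord p d) R) (\<lambda>(z,\<sigma>). F z \<sigma>)"
  proof -
    have "continuous_on (cball (coord p e) R \<times> cball (coord p d) R) (\<lambda>x. g (updp (updp p e (fst x)) d (snd x)))"
      by (rule continuous_on_compose2[of \<Omega> g]) (use g inO in \<open>auto simp: hol_def intro!: continuous_intros\<close>)
    then show ?thesis by (simp add: F_def case_prod_beta)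
  qed
  have hs: "F z holomorphic_on ball (coord p d) R" if "z \<in> cball (coord p e) R" for z
    unfolding holomorphic_on_def
  proof
    fix \<sigma> assume \<sigma>: "\<sigma> \<in> ball (coord p d) R"
    then have "updp (updp p e z) d \<sigma> \<in> \<Omega>" using inO that by auto
    from hol_D[OF g this, of d]
    have "(\<lambda>s. g (updp (updp (updp p e z) d \<sigma>) d s)) field_differentiable at (coord (updp (updp p e z) d \<sigma>) d)" .
    then show "F z field_differentiable at \<sigma> within ball (coord p d) R"
      by (auto simp: F_def intro: field_differentiable_at_within)
  qed
  have hz: "(\<lambda>z. F z \<sigma>) holomorphic_on ball (coord p e) R" if "\<sigma> \<in> cball (coord p d) R" for \<sigma>
    unfolding holomorphic_on_def
  proof
    fix z assume z: "z \<in> ball (coord p e) R"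
    then have "updp (updp p e z) d \<sigma> \<in> \<Omega>" using inO that by auto
    from hol_D[OF g this, of e]
    have "(\<lambda>s. g (updp (updp (updp p e z) d \<sigma>) e s)) field_differentiable at (coord (updp (updp p e z) d \<sigma>) e)" .
    then show "(\<lambda>z. F z \<sigma>) field_differentiable at z within ball (coord p e) R"
      using ed by (auto simp: F_def updp3 coord3 intro: field_differentiable_at_within)
  qed
  show ?thesis using lemB[OF cont hs hz R] by (simp add: F_def)
qed

lemma hol_dd:
  assumes O: "open \<Omega>" and g: "hol \<Omega> g"
  shows "hol \<Omega> (dd d g)"
  unfolding hol_def
proof safe
  show "continuous_on \<Omega> (dd d g)"
  proof (rule continuous_at_imp_continuous_on, rule ballI)
    fix p assume p: "p \<in> \<Omega>"
    obtain \<epsilon> where \<epsilon>: "\<epsilon> > 0" "ball p \<epsilon> \<subseteq> \<Omega>" using open_contains_ball O p by blast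
    define R where "R = \<epsilon>/4"
    have R: "R > 0" using \<epsilon> by (simp add: R_def)
    define c where "c = coord p d"
    have inO: "updp q d z \<in> \<Omega>" if "q \<in> ball p R" "z \<in> cball c R" for q z
    proof -
      have "dist (updp q d z) p \<le> dist (updp q d z) q + dist q p" by (rule dist_triangle)
      also have "\<dots> = dist z (coord q d) + dist q p" by (simp add: dist_updp_self)
      also have "\<dots> \<le> dist z c + dist c (coord q d) + dist q p"
        using dist_triangle[of z "coord q d" c] by simp
      also have "\<dots> \<le> R + R + R"
        using that dist_coord[of q d p] by (simp add: c_def dist_commute)
      finally have "dist p (updp q d z) < \<epsilon>" using \<epsilon> R_def by (simp add: dist_commute)
      then show ?thesis using \<epsilon>(2) by auto
    qed
    have cont: "continuous_on (ball p R \<times> cball c R) (\<lambda>(q,z). g (updp q d z))"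
    proof -
      have "continuous_on (ball p R \<times> cball c R) (\<lambda>x. g (updp (fst x) d (snd x)))"
        by (rule continuous_on_compose2[of \<Omega> g]) (use g inO in \<open>auto simp: hol_def intro!: continuous_intros\<close>)
      then show ?thesis by (simp add: case_prod_beta)
    qed
    have hl: "(\<lambda>z. g (updp q d z)) holomorphic_on ball c R" if "q \<in> ball p R" for q
      by (rule holomorphic_on_subset[OF slice_holo[OF g]]) (auto intro!: inO[OF that])
    have dc: "continuous_on (ball p R \<times> ball c (R/2)) (\<lambda>(q,w). deriv (\<lambda>z. g (updp q d z)) w)"
      by (rule dcont[where G="\<lambda>q z. g (updp q d z)", OF cont hl R])
    have "continuous_on (ball p (R/2)) (\<lambda>q. deriv (\<lambda>z. g (updp q d z)) (coord q d))"
    proof (rule continuous_on_compose2[OF dc, where f="\<lambda>q. (q, coord q d)", simplified])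
      show "continuous_on (ball p (R/2)) (\<lambda>q. (q, coord q d))" by (intro continuous_intros)
      show "(\<lambda>q. (q, coord q d)) ` ball p (R/2) \<subseteq> ball p R \<times> ball c (R/2)"
      proof safe
        fix q assume "q \<in> ball p (R/2)"
        then show "q \<in> ball p R" "coord q d \<in> ball c (R/2)"
          using dist_coord[of q d p] R by (auto simp: c_def dist_commute)
      qed
    qed
    then have "continuous_on (ball p (R/2)) (dd d g)" by (simp add: dd_def)
    then show "isCont (dd d g) p" using R by (simp add: continuous_on_eq_continuous_at)
  qed
next
  fix p e assume p: "p \<in> \<Omega>"
  show "(\<lambda>s. dd d g (updp p e s)) field_differentiable at (coord p e)"
  proof (cases "e = d")
    case True
    have "(\<lambda>s. dd d g (updp p e s)) = deriv (\<lambda>s. g (updp p d s))"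
      using True by (simp add: dd_def fun_eq_iff)
    moreover have "deriv (\<lambda>s. g (updp p d s)) holomorphic_on {s. updp p d s \<in> \<Omega>}"
      by (rule holomorphic_deriv[OF slice_holo[OF g] slice_open[OF O]])
    ultimately show ?thesis
      using True p by (auto intro: holomorphic_on_imp_differentiable_at[OF _ slice_open[OF O]])
  next
    case False
    have "(\<lambda>s. dd d g (updp p e s)) = (\<lambda>z. deriv (\<lambda>\<sigma>. g (updp (updp p e z) d \<sigma>)) (coord p d))"
      using False by (simp add: dd_def fun_eq_iff coord_updp_other[of d e])
    then show ?thesis using polyB[OF O g p False] by (auto simp: field_differentiable_def)
  qed
qed

lemma dd_comm:
  assumes O: "open \<Omega>" and g: "hol \<Omega> g" and p: "p \<in> \<Omega>"
  shows "dd e (dd d g) p = dd d (dd e g) p"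
proof (cases "e = d")
  case False
  have "dd e (dd d g) p = deriv (\<lambda>z. deriv (\<lambda>\<sigma>. g (updp (updp p e z) d \<sigma>)) (coord p d)) (coord p e)"
    using False by (simp add: dd_def coord_updp_other[of d e])
  also have "\<dots> = deriv (\<lambda>\<sigma>. deriv (\<lambda>z. g (updp (updp p e z) d \<sigma>)) (coord p e)) (coord p d)"
    by (rule DERIV_imp_deriv[OF polyB[OF O g p False]])
  also have "\<dots> = dd d (dd e g) p"
    using False by (simp add: dd_def coord_updp_other[of e d] updp_comm[of e d])
  finally show ?thesis .
qed simp


lemma mm_add_r: "((A::complex^'n::finite^'n) + B) ** C = A ** C + B ** C"
  by (simp add: vec_eq_iff matrix_matrix_mult_def sum.distrib distrib_right)
lemma mm_diff_l: "(A::complex^'n::finite^'n) ** (B - C) = A ** B - A ** C"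
  by (simp add: vec_eq_iff matrix_matrix_mult_def sum_subtractf right_diff_distrib)
lemma mm_diff_r: "((A::complex^'n::finite^'n) - B) ** C = A ** C - B ** C"
  by (simp add: vec_eq_iff matrix_matrix_mult_def sum_subtractf left_diff_distrib)
lemma mm_sum_r: "finite I \<Longrightarrow> (\<Sum>i\<in>I. (A i::complex^'n::finite^'n)) ** C = (\<Sum>i\<in>I. A i ** C)"
  by (induction I rule: finite_induct) (auto simp: mm_add_r)
lemma mm_sum_l: "finite I \<Longrightarrow> (C::complex^'n::finite^'n) ** (\<Sum>i\<in>I. A i) = (\<Sum>i\<in>I. C ** A i)"
  by (induction I rule: finite_induct) (auto simp: matrix_add_ldistrib)

definition ent :: "'n mfun \<Rightarrow> 'n \<Rightarrow> 'n \<Rightarrow> ((complex^'n) \<times> complex) \<Rightarrow> complex" where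
  "ent f i j p = f (fst p) (snd p) $ i $ j"

definition sd :: "'n::finite option \<Rightarrow> 'n mfun \<Rightarrow> 'n mfun" where
  "sd d f x t = (\<chi> i j. dd d (ent f i j) (x,t))"

lemma ent_sd: "ent (sd d f) i j = dd d (ent f i j)"
proof
  fix p :: "(complex^'a) \<times> complex"
  obtain x t where "p = (x,t)" by fastforce
  then show "ent (sd d f) i j p = dd d (ent f i j) p" by (simp add: sd_def ent_def)
qed

lemma holo_on_hol: "holo_on \<Omega> g \<longleftrightarrow> hol \<Omega> (\<lambda>p. g (fst p) (snd p))"
proof
  assume h: "holo_on \<Omega> g"
  show "hol \<Omega> (\<lambda>p. g (fst p) (snd p))"
    unfolding hol_def
  proof safe
    show "continuous_on \<Omega> (\<lambda>p. g (fst p) (snd p))" using h by (simp add: holo_on_def)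
  next
    fix p d assume p: "p \<in> \<Omega>"
    obtain x t where pe: "p = (x,t)" by fastforce
    show "(\<lambda>s. g (fst (updp p d s)) (snd (updp p d s))) field_differentiable at (coord p d)"
      using h p pe by (cases d) (auto simp: holo_on_def updp_def coord_def)
  qed
next
  assume h: "hol \<Omega> (\<lambda>p. g (fst p) (snd p))"
  show "holo_on \<Omega> g"
    unfolding holo_on_def
  proof safe
    show "continuous_on \<Omega> (\<lambda>p. g (fst p) (snd p))" using h by (simp add: hol_def)
  next
    fix x t a assume p: "(x,t) \<in> \<Omega>"
    from hol_D[OF h p, of "Some a"] show "(\<lambda>s. g (upd x a s) t) field_differentiable at (x $ a)"
      by (simp add: updp_def coord_def)
  next
    fix x t assume p: "(x,t) \<in> \<Omega>"
    from hol_D[OF h p, of None] show "(\<lambda>s. g x s) field_differentiable at t"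
      by (simp add: updp_def coord_def)
  qed
qed

lemma mholo_iff: "mholo_on \<Omega> f \<longleftrightarrow> (\<forall>i j. hol \<Omega> (ent f i j))"
  by (simp add: mholo_on_def holo_on_hol ent_def[abs_def])

lemma ent_pt[simp]: "ent f i j (x,t) = f x t $ i $ j"
  by (simp add: ent_def)

lemma pt_sd: "pt f = sd None f"
  by (simp add: fun_eq_iff vec_eq_iff pt_def sd_def dd_def ent_def updp_def coord_def)

lemma px_sd: "px a f = sd (Some a) f"
  by (simp add: fun_eq_iff vec_eq_iff px_def sd_def dd_def ent_def updp_def coord_def)

lemma ent_mult: "ent (\<lambda>x t. f x t ** g x t) i j = (\<lambda>p. \<Sum>l\<in>UNIV. ent f i l p * ent g l j p)"
  by (simp add: fun_eq_iff ent_def matrix_matrix_mult_def)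
lemma ent_add: "ent (\<lambda>x t. f x t + g x t) i j = (\<lambda>p. ent f i j p + ent g i j p)"
  by (simp add: fun_eq_iff ent_def)
lemma ent_diff: "ent (\<lambda>x t. f x t - g x t) i j = (\<lambda>p. ent f i j p - ent g i j p)"
  by (simp add: fun_eq_iff ent_def)
lemma ent_sum: "ent (\<lambda>x t. \<Sum>l\<in>I. f l x t) i j = (\<lambda>p. \<Sum>l\<in>I. ent (f l) i j p)"
  by (simp add: fun_eq_iff ent_def sum_component)
lemma ent_zero: "ent (\<lambda>x t. 0) i j = (\<lambda>p. 0)"
  by (simp add: fun_eq_iff ent_def)
lemma ent_const: "ent (\<lambda>x t. c) i j = (\<lambda>p. c $ i $ j)"
  by (simp add: fun_eq_iff ent_def)

lemma mholo_mult: "mholo_on \<Omega> f \<Longrightarrow> mholo_on \<Omega> g \<Longrightarrow> mholo_on \<Omega> (\<lambda>x t. f x t ** g x t)"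
  unfolding mholo_iff ent_mult by (auto intro!: hol_sum hol_mult)
lemma mholo_add: "mholo_on \<Omega> f \<Longrightarrow> mholo_on \<Omega> g \<Longrightarrow> mholo_on \<Omega> (\<lambda>x t. f x t + g x t)"
  unfolding mholo_iff ent_add by (auto intro!: hol_add)
lemma mholo_diff: "mholo_on \<Omega> f \<Longrightarrow> mholo_on \<Omega> g \<Longrightarrow> mholo_on \<Omega> (\<lambda>x t. f x t - g x t)"
  unfolding mholo_iff ent_diff by (auto intro!: hol_diff)
lemma mholo_sum: "finite I \<Longrightarrow> (\<And>l. l \<in> I \<Longrightarrow> mholo_on \<Omega> (f l)) \<Longrightarrow> mholo_on \<Omega> (\<lambda>x t. \<Sum>l\<in>I. f l x t)"
  unfolding mholo_iff ent_sum by (auto intro!: hol_sum)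
lemma mholo_const: "mholo_on \<Omega> (\<lambda>x t. c)"
  unfolding mholo_iff ent_const by (auto intro!: hol_const)
lemma mholo_sd: "open \<Omega> \<Longrightarrow> mholo_on \<Omega> f \<Longrightarrow> mholo_on \<Omega> (sd d f)"
proof -
  assume O: "open \<Omega>" and f: "mholo_on \<Omega> f"
  show ?thesis unfolding mholo_iff
  proof (intro allI)
    fix i j
    have "hol \<Omega> (ent f i j)" using f by (simp add: mholo_iff)
    then have "hol \<Omega> (dd d (ent f i j))" by (rule hol_dd[OF O])
    then show "hol \<Omega> (ent (sd d f) i j)" by (simp only: ent_sd)
  qed
qed
lemma mholo_cong: "open \<Omega> \<Longrightarrow> mholo_on \<Omega> g \<Longrightarrow> (\<And>x t. (x,t) \<in> \<Omega> \<Longrightarrow> f x t = g x t) \<Longrightarrow> mholo_on \<Omega> f"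
proof -
  assume O: "open \<Omega>" and g: "mholo_on \<Omega> g" and e: "\<And>x t. (x,t) \<in> \<Omega> \<Longrightarrow> f x t = g x t"
  show ?thesis unfolding mholo_iff
  proof (intro allI)
    fix i j
    have "hol \<Omega> (ent g i j)" using g by (simp add: mholo_iff)
    moreover have "ent f i j q = ent g i j q" if "q \<in> \<Omega>" for q
      using e[of "fst q" "snd q"] that by (simp add: ent_def)
    ultimately show "hol \<Omega> (ent f i j)" by (rule hol_cong[OF O])
  qed
qed

lemma sd_mult: "mholo_on \<Omega> f \<Longrightarrow> mholo_on \<Omega> g \<Longrightarrow> (x,t) \<in> \<Omega> \<Longrightarrow>
   sd d (\<lambda>x t. f x t ** g x t) x t = sd d f x t ** g x t + f x t ** sd d g x t"
proof -
  assume f: "mholo_on \<Omega> f" and g: "mholo_on \<Omega> g" and p: "(x,t) \<in> \<Omega>"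
  have hf: "hol \<Omega> (ent f i j)" and hg: "hol \<Omega> (ent g i j)" for i j using f g by (auto simp: mholo_iff)
  have key: "dd d (\<lambda>p. \<Sum>l\<in>UNIV. ent f i l p * ent g l j p) (x,t)
        = (\<Sum>l\<in>UNIV. dd d (ent f i l) (x,t) * g x t $ l $ j) + (\<Sum>l\<in>UNIV. f x t $ i $ l * dd d (ent g l j) (x,t))" for i j
  proof -
    have "dd d (\<lambda>p. \<Sum>l\<in>UNIV. ent f i l p * ent g l j p) (x,t)
        = (\<Sum>l\<in>UNIV. dd d (\<lambda>p. ent f i l p * ent g l j p) (x,t))"
      by (rule dd_sum[OF _ _ p]) (auto intro: hol_mult hf hg)
    also have "\<dots> = (\<Sum>l\<in>UNIV. dd d (ent f i l) (x,t) * g x t $ l $ j + f x t $ i $ l * dd d (ent g l j) (x,t))"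
      by (rule sum.cong[OF refl]) (simp add: dd_mult[OF hf hg p])
    finally show ?thesis by (simp only: sum.distrib)
  qed
  have "(sd d (\<lambda>x t. f x t ** g x t) x t) $ i $ j = (sd d f x t ** g x t + f x t ** sd d g x t) $ i $ j" for i j
  proof -
    have "(sd d (\<lambda>x t. f x t ** g x t) x t) $ i $ j = dd d (\<lambda>p. \<Sum>l\<in>UNIV. ent f i l p * ent g l j p) (x,t)"
      by (simp only: sd_def ent_mult vec_lambda_beta)
    also have "\<dots> = (\<Sum>l\<in>UNIV. dd d (ent f i l) (x,t) * g x t $ l $ j) + (\<Sum>l\<in>UNIV. f x t $ i $ l * dd d (ent g l j) (x,t))"
      by (rule key)
    also have "\<dots> = (sd d f x t ** g x t + f x t ** sd d g x t) $ i $ j"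
      by (simp only: matrix_matrix_mult_def sd_def vec_lambda_beta vector_add_component)
    finally show ?thesis .
  qed
  then show ?thesis by (simp add: vec_eq_iff)
qed
lemma sd_add: "mholo_on \<Omega> f \<Longrightarrow> mholo_on \<Omega> g \<Longrightarrow> (x,t) \<in> \<Omega> \<Longrightarrow>
   sd d (\<lambda>x t. f x t + g x t) x t = sd d f x t + sd d g x t"
proof -
  assume f: "mholo_on \<Omega> f" and g: "mholo_on \<Omega> g" and p: "(x,t) \<in> \<Omega>"
  have "sd d (\<lambda>x t. f x t + g x t) x t $ i $ j = (sd d f x t + sd d g x t) $ i $ j" for i j
  proof -
    have "hol \<Omega> (ent f i j)" "hol \<Omega> (ent g i j)" using f g by (simp_all add: mholo_iff)
    then show ?thesis unfolding sd_def ent_add vec_lambda_beta vector_add_component by (rule dd_add[OF _ _ p])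
  qed
  then show ?thesis by (simp add: vec_eq_iff)
qed
lemma sd_diff: "mholo_on \<Omega> f \<Longrightarrow> mholo_on \<Omega> g \<Longrightarrow> (x,t) \<in> \<Omega> \<Longrightarrow>
   sd d (\<lambda>x t. f x t - g x t) x t = sd d f x t - sd d g x t"
proof -
  assume f: "mholo_on \<Omega> f" and g: "mholo_on \<Omega> g" and p: "(x,t) \<in> \<Omega>"
  have "sd d (\<lambda>x t. f x t - g x t) x t $ i $ j = (sd d f x t - sd d g x t) $ i $ j" for i j
  proof -
    have "hol \<Omega> (ent f i j)" "hol \<Omega> (ent g i j)" using f g by (simp_all add: mholo_iff)
    then show ?thesis unfolding sd_def ent_diff vec_lambda_beta vector_minus_component by (rule dd_diff[OF _ _ p])
  qed
  then show ?thesis by (simp add: vec_eq_iff)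
qed
lemma sd_sum: "finite I \<Longrightarrow> (\<And>l. l \<in> I \<Longrightarrow> mholo_on \<Omega> (f l)) \<Longrightarrow> (x,t) \<in> \<Omega> \<Longrightarrow>
   sd d (\<lambda>x t. \<Sum>l\<in>I. f l x t) x t = (\<Sum>l\<in>I. sd d (f l) x t)"
proof -
  assume I: "finite I" and f: "\<And>l. l \<in> I \<Longrightarrow> mholo_on \<Omega> (f l)" and p: "(x,t) \<in> \<Omega>"
  have "sd d (\<lambda>x t. \<Sum>l\<in>I. f l x t) x t $ i $ j = (\<Sum>l\<in>I. sd d (f l) x t) $ i $ j" for i j
  proof -
    have "\<And>l. l \<in> I \<Longrightarrow> hol \<Omega> (ent (f l) i j)" using f by (simp add: mholo_iff)
    then have "dd d (\<lambda>p. \<Sum>l\<in>I. ent (f l) i j p) (x,t) = (\<Sum>l\<in>I. dd d (ent (f l) i j) (x,t))"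
      by (rule dd_sum[OF I _ p])
    then show ?thesis unfolding sd_def ent_sum vec_lambda_beta sum_component .
  qed
  then show ?thesis by (simp add: vec_eq_iff)
qed
lemma sd_zero: "sd d (\<lambda>x t. 0) = (\<lambda>x t. 0)"
  unfolding sd_def ent_zero dd_const by (simp add: fun_eq_iff vec_eq_iff)
lemma sd_cong: "open \<Omega> \<Longrightarrow> (x,t) \<in> \<Omega> \<Longrightarrow> (\<And>x t. (x,t) \<in> \<Omega> \<Longrightarrow> f x t = g x t) \<Longrightarrow> sd d f x t = sd d g x t"
proof -
  assume O: "open \<Omega>" and p: "(x,t) \<in> \<Omega>" and e: "\<And>x t. (x,t) \<in> \<Omega> \<Longrightarrow> f x t = g x t"
  have "ent f i j q = ent g i j q" if "q \<in> \<Omega>" for q i j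
    using e[of "fst q" "snd q"] that by (simp add: ent_def)
  then have "sd d f x t $ i $ j = sd d g x t $ i $ j" for i j
    unfolding sd_def vec_lambda_beta by (intro dd_cong[OF O p])
  then show ?thesis by (simp add: vec_eq_iff)
qed
lemma sd_comm: "open \<Omega> \<Longrightarrow> mholo_on \<Omega> f \<Longrightarrow> (x,t) \<in> \<Omega> \<Longrightarrow> sd d (sd e f) x t = sd e (sd d f) x t"
proof -
  assume O: "open \<Omega>" and f: "mholo_on \<Omega> f" and p: "(x,t) \<in> \<Omega>"
  have e: "ent (sd d f) i j = dd d (ent f i j)" for d i j
    by (rule ent_sd)
  have "sd d (sd e f) x t $ i $ j = sd e (sd d f) x t $ i $ j" for i j
  proof -
    have "hol \<Omega> (ent f i j)" using f by (simp add: mholo_iff)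
    then show ?thesis unfolding sd_def e vec_lambda_beta by (rule dd_comm[OF O _ p])
  qed
  then show ?thesis by (simp add: vec_eq_iff)
qed


definition lb :: "('n::finite) ser \<Rightarrow> int \<Rightarrow> bool" where
  "lb X p \<longleftrightarrow> (\<forall>k<p. X k = (\<lambda>_ _. 0))"

definition sdS :: "'n::finite option \<Rightarrow> 'n ser \<Rightarrow> 'n ser" where
  "sdS d X k = sd d (X k)"

definition HO :: "((complex^'n::finite) \<times> complex) set \<Rightarrow> 'n ser \<Rightarrow> bool" where
  "HO \<Omega> X \<longleftrightarrow> (\<forall>k. mholo_on \<Omega> (X k))"

definition sadd :: "('n::finite) ser \<Rightarrow> 'n ser \<Rightarrow> 'n ser" where
  "sadd X Y = (\<lambda>k x t. X k x t + Y k x t)"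
definition ssub :: "('n::finite) ser \<Rightarrow> 'n ser \<Rightarrow> 'n ser" where
  "ssub X Y = (\<lambda>k x t. X k x t - Y k x t)"

lemma spt_sdS: "spt X = sdS None X"
  by (simp add: fun_eq_iff spt_def sdS_def pt_sd)
lemma spx_sdS: "spx a X = sdS (Some a) X"
  by (simp add: fun_eq_iff spx_def sdS_def px_sd)

lemma lbD: "lb X p \<Longrightarrow> k < p \<Longrightarrow> X k x t = 0"
  by (simp add: lb_def)
lemma lb_mono: "lb X p \<Longrightarrow> q \<le> p \<Longrightarrow> lb X q"
  by (simp add: lb_def)
lemma lb_sadd: "lb X p \<Longrightarrow> lb Y p \<Longrightarrow> lb (sadd X Y) p"
  by (simp add: lb_def sadd_def)
lemma lb_ssub: "lb X p \<Longrightarrow> lb Y p \<Longrightarrow> lb (ssub X Y) p"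
  by (simp add: lb_def ssub_def)
lemma lb_sdS: "lb X p \<Longrightarrow> lb (sdS d X) p"
  by (simp add: lb_def sdS_def sd_zero)
lemma lb_sone: "lb sone 0"
  by (simp add: lb_def sone_def)

lemma smult_win:
  assumes X: "lb X p" and Y: "lb Y q" and I: "finite I" "{p..k-q} \<subseteq> I"
  shows "smult X Y k x t = (\<Sum>i\<in>I. X i x t ** Y (k-i) x t)"
proof -
  define S where "S = {i. X i \<noteq> (\<lambda>_ _. 0) \<and> Y (k - i) \<noteq> (\<lambda>_ _. 0)}"
  have SW: "S \<subseteq> {p..k-q}"
  proof
    fix i assume "i \<in> S"
    then have "X i \<noteq> (\<lambda>_ _. 0)" "Y (k-i) \<noteq> (\<lambda>_ _. 0)" by (auto simp: S_def)
    then have "\<not> i < p" "\<not> k - i < q" using X Y unfolding lb_def by auto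
    then show "i \<in> {p..k-q}" by auto
  qed
  have "smult X Y k x t = (\<Sum>i\<in>S. X i x t ** Y (k-i) x t)"
    by (simp add: smult_def S_def)
  also have "\<dots> = (\<Sum>i\<in>I. X i x t ** Y (k-i) x t)"
  proof (rule sum.mono_neutral_left[OF I(1)])
    show "S \<subseteq> I" using SW I(2) by blast
    show "\<forall>i\<in>I - S. X i x t ** Y (k - i) x t = 0"
    proof
      fix i assume "i \<in> I - S"
      then have "X i = (\<lambda>_ _. 0) \<or> Y (k-i) = (\<lambda>_ _. 0)" by (auto simp: S_def)
      then show "X i x t ** Y (k - i) x t = 0" by auto
    qed
  qed
  finally show ?thesis .
qed

lemma smult_win0:
  "lb X p \<Longrightarrow> lb Y q \<Longrightarrow> smult X Y k x t = (\<Sum>i\<in>{p..k-q}. X i x t ** Y (k-i) x t)"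
  by (rule smult_win) auto

lemma smult_fun:
  "lb X p \<Longrightarrow> lb Y q \<Longrightarrow> smult X Y k = (\<lambda>x t. \<Sum>i\<in>{p..k-q}. X i x t ** Y (k-i) x t)"
  by (simp add: fun_eq_iff smult_win0)

lemma lb_smult: "lb X p \<Longrightarrow> lb Y q \<Longrightarrow> lb (smult X Y) (p+q)"
  unfolding lb_def[of "smult X Y"] by (auto simp: fun_eq_iff smult_win0)

lemma smult_cong_pt:
  assumes "lb X p" "lb X' p" "lb Y q" "lb Y' q" "\<And>i. X i x t = X' i x t" "\<And>i. Y i x t = Y' i x t"
  shows "smult X Y k x t = smult X' Y' k x t"
  using assms by (simp add: smult_win0[of X p Y q] smult_win0[of X' p Y' q])

lemma smult_add_l:
  assumes X: "lb X p" and Y: "lb Y p" and Z: "lb Z r"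
  shows "smult (sadd X Y) Z k x t = smult X Z k x t + smult Y Z k x t"
proof -
  have "smult (sadd X Y) Z k x t = (\<Sum>i\<in>{p..k-r}. sadd X Y i x t ** Z (k-i) x t)"
    by (rule smult_win0[OF lb_sadd[OF X Y] Z])
  then show ?thesis by (simp add: sadd_def mm_add_r sum.distrib smult_win0[OF X Z] smult_win0[OF Y Z])
qed
lemma smult_sub_l:
  assumes X: "lb X p" and Y: "lb Y p" and Z: "lb Z r"
  shows "smult (ssub X Y) Z k x t = smult X Z k x t - smult Y Z k x t"
proof -
  have "smult (ssub X Y) Z k x t = (\<Sum>i\<in>{p..k-r}. ssub X Y i x t ** Z (k-i) x t)"
    by (rule smult_win0[OF lb_ssub[OF X Y] Z])
  then show ?thesis by (simp add: ssub_def mm_diff_r sum_subtractf smult_win0[OF X Z] smult_win0[OF Y Z])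
qed
lemma smult_add_r:
  assumes X: "lb X p" and Y: "lb Y r" and Z: "lb Z r"
  shows "smult X (sadd Y Z) k x t = smult X Y k x t + smult X Z k x t"
proof -
  have "smult X (sadd Y Z) k x t = (\<Sum>i\<in>{p..k-r}. X i x t ** sadd Y Z (k-i) x t)"
    by (rule smult_win0[OF X lb_sadd[OF Y Z]])
  then show ?thesis by (simp add: sadd_def matrix_add_ldistrib sum.distrib smult_win0[OF X Y] smult_win0[OF X Z])
qed
lemma smult_sub_r:
  assumes X: "lb X p" and Y: "lb Y r" and Z: "lb Z r"
  shows "smult X (ssub Y Z) k x t = smult X Y k x t - smult X Z k x t"
proof -
  have "smult X (ssub Y Z) k x t = (\<Sum>i\<in>{p..k-r}. X i x t ** ssub Y Z (k-i) x t)"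
    by (rule smult_win0[OF X lb_ssub[OF Y Z]])
  then show ?thesis by (simp add: ssub_def mm_diff_l sum_subtractf smult_win0[OF X Y] smult_win0[OF X Z])
qed

lemma smult_sone_l: "lb X p \<Longrightarrow> smult sone X k x t = X k x t"
proof -
  assume X: "lb X p"
  have "smult sone X k x t = (\<Sum>i\<in>insert 0 {0..k-p}. sone i x t ** X (k-i) x t)"
    by (rule smult_win[OF lb_sone X]) auto
  also have "\<dots> = (\<Sum>i\<in>insert 0 {0..k-p}. if i = 0 then X k x t else 0)"
    by (rule sum.cong) (auto simp: sone_def)
  also have "\<dots> = X k x t" by simp
  finally show ?thesis .
qed

lemma smult_sone_r: "lb X p \<Longrightarrow> smult X sone k x t = X k x t"
proof -
  assume X: "lb X p"
  have "smult X sone k x t = (\<Sum>i\<in>insert k {p..k}. X i x t ** sone (k-i) x t)"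
    by (rule smult_win[OF X lb_sone]) auto
  also have "\<dots> = (\<Sum>i\<in>insert k {p..k}. if i = k then X k x t else 0)"
    by (rule sum.cong) (auto simp: sone_def)
  also have "\<dots> = X k x t" by simp
  finally show ?thesis .
qed

lemma smult_assoc:
  assumes X: "lb X p" and Y: "lb Y q" and Z: "lb Z r"
  shows "smult (smult X Y) Z k x t = smult X (smult Y Z) k x t"
proof -
  define I where "I = {p+q..k-r}"
  define J where "J = {p..k-q-r}"
  have "smult (smult X Y) Z k x t = (\<Sum>i\<in>I. smult X Y i x t ** Z (k-i) x t)"
    unfolding I_def by (rule smult_win0[OF lb_smult[OF X Y] Z])
  also have "\<dots> = (\<Sum>i\<in>I. (\<Sum>j\<in>J. X j x t ** Y (i-j) x t) ** Z (k-i) x t)"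
    by (rule sum.cong[OF refl], subst smult_win[OF X Y]) (auto simp: I_def J_def)
  also have "\<dots> = (\<Sum>i\<in>I. \<Sum>j\<in>J. X j x t ** (Y (i-j) x t ** Z (k-i) x t))"
    by (simp add: mm_sum_r matrix_mul_assoc J_def)
  also have "\<dots> = (\<Sum>j\<in>J. \<Sum>i\<in>I. X j x t ** (Y (i-j) x t ** Z (k-i) x t))"
    by (rule sum.swap)
  also have "\<dots> = (\<Sum>j\<in>J. X j x t ** smult Y Z (k-j) x t)"
  proof (rule sum.cong[OF refl])
    fix j assume j: "j \<in> J"
    have "smult Y Z (k-j) x t = (\<Sum>l\<in>(\<lambda>i. i - j) ` I. Y l x t ** Z (k - j - l) x t)"
    proof (rule smult_win[OF Y Z])
      show "finite ((\<lambda>i. i - j) ` I)" by (simp add: I_def)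
      show "{q..k - j - r} \<subseteq> (\<lambda>i. i - j) ` I"
      proof
        fix l assume "l \<in> {q..k-j-r}"
        then have "l + j \<in> I" "l = (l+j) - j" using j by (auto simp: I_def J_def)
        then show "l \<in> (\<lambda>i. i - j) ` I" by blast
      qed
    qed
    also have "\<dots> = (\<Sum>i\<in>I. Y (i-j) x t ** Z (k - i) x t)"
      by (subst sum.reindex) (auto simp: inj_on_def)
    finally show "(\<Sum>i\<in>I. X j x t ** (Y (i-j) x t ** Z (k-i) x t)) = X j x t ** smult Y Z (k-j) x t"
      by (simp add: mm_sum_l I_def)
  qed
  also have "\<dots> = smult X (smult Y Z) k x t"
    unfolding J_def using smult_win0[OF X lb_smult[OF Y Z], of k x t] by (simp add: algebra_simps)
  finally show ?thesis .
qed

lemma HO_smult: "HO \<Omega> X \<Longrightarrow> HO \<Omega> Y \<Longrightarrow> lb X p \<Longrightarrow> lb Y q \<Longrightarrow> HO \<Omega> (smult X Y)"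
  unfolding HO_def
proof
  fix k assume X: "\<forall>k. mholo_on \<Omega> (X k)" and Y: "\<forall>k. mholo_on \<Omega> (Y k)" and lX: "lb X p" and lY: "lb Y q"
  show "mholo_on \<Omega> (smult X Y k)"
    unfolding smult_fun[OF lX lY] by (intro mholo_sum mholo_mult) (use X Y in auto)
qed

lemma HO_sdS: "open \<Omega> \<Longrightarrow> HO \<Omega> X \<Longrightarrow> HO \<Omega> (sdS d X)"
  by (simp add: HO_def sdS_def mholo_sd)

lemma HO_sadd: "HO \<Omega> X \<Longrightarrow> HO \<Omega> Y \<Longrightarrow> HO \<Omega> (sadd X Y)"
  by (simp add: HO_def sadd_def mholo_add)
lemma HO_ssub: "HO \<Omega> X \<Longrightarrow> HO \<Omega> Y \<Longrightarrow> HO \<Omega> (ssub X Y)"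
  by (simp add: HO_def ssub_def mholo_diff)

lemma sd_smult:
  assumes X: "HO \<Omega> X" "lb X p" and Y: "HO \<Omega> Y" "lb Y q" and xt: "(x,t) \<in> \<Omega>"
  shows "sd d (smult X Y k) x t = smult (sdS d X) Y k x t + smult X (sdS d Y) k x t"
proof -
  have mX: "mholo_on \<Omega> (X i)" and mY: "mholo_on \<Omega> (Y i)" for i using X Y by (auto simp: HO_def)
  have "sd d (smult X Y k) x t = sd d (\<lambda>x t. \<Sum>i\<in>{p..k-q}. X i x t ** Y (k-i) x t) x t"
    by (simp add: smult_fun[OF X(2) Y(2)])
  also have "\<dots> = (\<Sum>i\<in>{p..k-q}. sd d (\<lambda>x t. X i x t ** Y (k-i) x t) x t)"
    by (rule sd_sum[OF _ _ xt]) (auto intro: mholo_mult mX mY)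
  also have "\<dots> = (\<Sum>i\<in>{p..k-q}. sd d (X i) x t ** Y (k-i) x t + X i x t ** sd d (Y (k-i)) x t)"
    by (rule sum.cong[OF refl]) (rule sd_mult[OF mX mY xt])
  also have "\<dots> = smult (sdS d X) Y k x t + smult X (sdS d Y) k x t"
    by (simp add: sum.distrib smult_win0[OF lb_sdS[OF X(2)] Y(2)] smult_win0[OF X(2) lb_sdS[OF Y(2)]] sdS_def)
  finally show ?thesis .
qed


lemma lb_zero: "lb (\<lambda>k x t. 0) p"
  by (simp add: lb_def)

lemma smult_zero_r: "lb X p \<Longrightarrow> (\<And>i. Y i x t = 0) \<Longrightarrow> lb Y q \<Longrightarrow> smult X Y k x t = 0"
  by (simp add: smult_win0)

lemma key_identity:
  fixes T Ti P Aa Hh :: "'n::finite ser" and a :: 'n and N :: int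
  assumes O: "open \<Omega>"
   and lT: "lb T 0" and lTi: "lb Ti 0" and lP: "lb P N" and lA: "lb Aa (-1)" and lH: "lb Hh (-1)" and N: "N \<le> 0"
   and hT: "HO \<Omega> T" and hTi: "HO \<Omega> Ti" and hP: "HO \<Omega> P" and hA: "HO \<Omega> Aa"
   and inv1: "\<And>k x t. (x,t) \<in> \<Omega> \<Longrightarrow> smult T Ti k x t = sone k x t"
   and inv2: "\<And>k x t. (x,t) \<in> \<Omega> \<Longrightarrow> smult Ti T k x t = sone k x t"
   and dress: "\<And>k x t. (x,t) \<in> \<Omega> \<Longrightarrow> smult Ti (sdS (Some a) T) k x t + smult (smult Ti Aa) T k x t = Hh k x t"
   and evol: "\<And>k x t. (x,t) \<in> \<Omega> \<Longrightarrow> sdS None Aa k x t = scomm P Aa k x t - sdS (Some a) P k x t"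
   and M_def: "M = smult Ti (ssub (sdS None T) (smult P T))"
  shows "\<And>k x t. (x,t) \<in> \<Omega> \<Longrightarrow> sdS None Hh k x t - sdS (Some a) M k x t + scomm M Hh k x t = 0"
proof -
  define dT where "dT = sdS (Some a) T"
  define tT where "tT = sdS None T"
  define D where "D = ssub tT (smult P T)"
  have MD: "M = smult Ti D" by (simp add: M_def D_def tT_def)
  have ldT: "lb dT 0" and ltT: "lb tT 0" using lT by (simp_all add: dT_def tT_def lb_sdS)
  have lPT: "lb (smult P T) N" using lb_smult[OF lP lT] by simp
  have lD: "lb D N" unfolding D_def by (rule lb_ssub[OF lb_mono[OF ltT N] lPT])
  have lM: "lb M N" using lb_smult[OF lTi lD] by (simp add: MD)
  have hdT: "HO \<Omega> dT" and htT: "HO \<Omega> tT" using hT O by (simp_all add: dT_def tT_def HO_sdS)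
  have hD: "HO \<Omega> D" unfolding D_def by (intro HO_ssub htT HO_smult[OF hP hT lP lT])
  have hM: "HO \<Omega> M" unfolding MD by (rule HO_smult[OF hTi hD lTi lD])
  have lTidT: "lb (smult Ti dT) (-1)" using lb_mono[OF lb_smult[OF lTi ldT]] by simp
  have lTiA: "lb (smult Ti Aa) (-1)" using lb_smult[OF lTi lA] by simp
  have lTiAT: "lb (smult (smult Ti Aa) T) (-1)" using lb_smult[OF lTiA lT] by simp
  have lAT: "lb (smult Aa T) (-1)" using lb_smult[OF lA lT] by simp
  have hH: "HO \<Omega> Hh"
  proof -
    have "HO \<Omega> (sadd (smult Ti dT) (smult (smult Ti Aa) T))"
      by (intro HO_sadd HO_smult[OF hTi hdT lTi ldT] HO_smult[OF HO_smult[OF hTi hA lTi lA] hT lTiA lT])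
    then show ?thesis unfolding HO_def
      by (auto intro: mholo_cong[OF O] simp: sadd_def dress[unfolded dT_def[symmetric]])
  qed
  have E1: "smult T Hh k x t = dT k x t + smult Aa T k x t" if xt: "(x,t) \<in> \<Omega>" for k x t
  proof -
    have "smult T Hh k x t = smult T (sadd (smult Ti dT) (smult (smult Ti Aa) T)) k x t"
      by (rule smult_cong_pt[OF lT lT lH lb_sadd[OF lTidT lTiAT]])
         (simp_all add: sadd_def dress[OF xt, unfolded dT_def[symmetric]])
    also have "\<dots> = smult T (smult Ti dT) k x t + smult T (smult (smult Ti Aa) T) k x t"
      by (rule smult_add_r[OF lT lTidT lTiAT])
    also have "smult T (smult Ti dT) k x t = smult (smult T Ti) dT k x t"
      by (rule smult_assoc[OF lT lTi ldT, symmetric])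
    also have "\<dots> = smult sone dT k x t"
      by (rule smult_cong_pt[OF lb_smult[OF lT lTi, simplified] lb_sone ldT ldT]) (simp_all add: inv1[OF xt])
    also have "\<dots> = dT k x t" by (rule smult_sone_l[OF ldT])
    also have "smult T (smult (smult Ti Aa) T) k x t = smult (smult T (smult Ti Aa)) T k x t"
      by (rule smult_assoc[OF lT lTiA lT, symmetric])
    also have "\<dots> = smult Aa T k x t"
    proof (rule smult_cong_pt[OF _ lA lT lT])
      show "lb (smult T (smult Ti Aa)) (-1)" using lb_smult[OF lT lTiA] by simp
      fix i
      have "smult T (smult Ti Aa) i x t = smult (smult T Ti) Aa i x t"
        by (rule smult_assoc[OF lT lTi lA, symmetric])
      also have "\<dots> = smult sone Aa i x t"
        by (rule smult_cong_pt[OF lb_smult[OF lT lTi, simplified] lb_sone lA lA]) (simp_all add: inv1[OF xt])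
      also have "\<dots> = Aa i x t" by (rule smult_sone_l[OF lA])
      finally show "smult T (smult Ti Aa) i x t = Aa i x t" .
    qed simp
    finally show ?thesis .
  qed
  have E2: "smult T M k x t = D k x t" if xt: "(x,t) \<in> \<Omega>" for k x t
  proof -
    have "smult T M k x t = smult (smult T Ti) D k x t"
      unfolding MD by (rule smult_assoc[OF lT lTi lD, symmetric])
    also have "\<dots> = smult sone D k x t"
      by (rule smult_cong_pt[OF lb_smult[OF lT lTi, simplified] lb_sone lD lD]) (simp_all add: inv1[OF xt])
    also have "\<dots> = D k x t" by (rule smult_sone_l[OF lD])
    finally show ?thesis .
  qed
  have mT: "mholo_on \<Omega> (T k)" for k using hT by (simp add: HO_def)
  have lTH: "lb (smult T Hh) (-1)" using lb_smult[OF lT lH] by simp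
  have lTM: "lb (smult T M) N" using lb_smult[OF lT lM] by simp
  have ldT1: "lb dT (-1)" by (rule lb_mono[OF ldT]) simp
  have lE1: "lb (sadd dT (smult Aa T)) (-1)" by (rule lb_sadd[OF ldT1 lAT])
  have ltTN: "lb tT N" by (rule lb_mono[OF ltT N])
  define L where "L = N - 1"
  have LN: "L \<le> N" "L \<le> -1" using N by (auto simp: L_def)
  have lPA: "lb (smult P Aa) L" using lb_smult[OF lP lA] by (simp add: L_def)
  have lAP: "lb (smult Aa P) L" using lb_smult[OF lA lP] by (simp add: L_def)
  have ldPL: "lb (sdS (Some a) P) L" by (rule lb_mono[OF lb_sdS[OF lP] LN(1)])
  have ltAL: "lb (sdS None Aa) L" by (rule lb_mono[OF lb_sdS[OF lA] LN(2)])
  have ltHL: "lb (sdS None Hh) L" by (rule lb_mono[OF lb_sdS[OF lH] LN(2)])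
  have ldML: "lb (sdS (Some a) M) L" by (rule lb_mono[OF lb_sdS[OF lM] LN(1)])
  have lMH: "lb (smult M Hh) L" using lb_smult[OF lM lH] by (simp add: L_def)
  have lHM: "lb (smult Hh M) L" using lb_smult[OF lH lM] by (simp add: L_def add.commute)
  define Es where "Es = sadd (ssub (sdS None Hh) (sdS (Some a) M)) (ssub (smult M Hh) (smult Hh M))"
  have lEs: "lb Es L" unfolding Es_def by (intro lb_sadd lb_ssub ltHL ldML lMH lHM)
  have Es_eq: "Es k x t = sdS None Hh k x t - sdS (Some a) M k x t + scomm M Hh k x t" for k x t
    by (simp add: Es_def sadd_def ssub_def scomm_def)
  have G0: "smult T Es k x t = 0" if xt: "(x,t) \<in> \<Omega>" for k x t
  proof -
    have a1: "sd None (smult T Hh k) x t = smult tT Hh k x t + smult T (sdS None Hh) k x t"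
      using sd_smult[OF hT lT hH lH xt, of None k] by (simp add: tT_def)
    have a2: "sd None (smult T Hh k) x t = sdS None dT k x t + (smult (sdS None Aa) T k x t + smult Aa tT k x t)"
    proof -
      have "sd None (smult T Hh k) x t = sd None (\<lambda>x t. dT k x t + smult Aa T k x t) x t"
        by (rule sd_cong[OF O xt]) (rule E1)
      also have "\<dots> = sd None (dT k) x t + sd None (smult Aa T k) x t"
        by (rule sd_add[OF _ _ xt]) (use hdT HO_smult[OF hA hT lA lT] in \<open>auto simp: HO_def\<close>)
      also have "sd None (smult Aa T k) x t = smult (sdS None Aa) T k x t + smult Aa (sdS None T) k x t"
        by (rule sd_smult[OF hA lA hT lT xt])
      finally show ?thesis by (simp add: sdS_def tT_def)
    qed
    have b1: "sd (Some a) (smult T M k) x t = smult dT M k x t + smult T (sdS (Some a) M) k x t"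
      using sd_smult[OF hT lT hM lM xt, of "Some a" k] by (simp add: dT_def)
    have b2: "sd (Some a) (smult T M k) x t = sdS (Some a) tT k x t - (smult (sdS (Some a) P) T k x t + smult P dT k x t)"
    proof -
      have "sd (Some a) (smult T M k) x t = sd (Some a) (\<lambda>x t. tT k x t - smult P T k x t) x t"
        by (rule sd_cong[OF O xt]) (simp add: E2 D_def ssub_def)
      also have "\<dots> = sd (Some a) (tT k) x t - sd (Some a) (smult P T k) x t"
        by (rule sd_diff[OF _ _ xt]) (use htT HO_smult[OF hP hT lP lT] in \<open>auto simp: HO_def\<close>)
      also have "sd (Some a) (smult P T k) x t = smult (sdS (Some a) P) T k x t + smult P (sdS (Some a) T) k x t"
        by (rule sd_smult[OF hP lP hT lT xt])
      finally show ?thesis by (simp add: sdS_def dT_def)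
    qed
    have c: "smult T (smult M Hh) k x t = smult tT Hh k x t - (smult P dT k x t + smult P (smult Aa T) k x t)"
    proof -
      have "smult T (smult M Hh) k x t = smult (smult T M) Hh k x t"
        by (rule smult_assoc[OF lT lM lH, symmetric])
      also have "\<dots> = smult D Hh k x t"
        by (rule smult_cong_pt[OF lTM lD lH lH]) (simp_all add: E2[OF xt])
      also have "\<dots> = smult tT Hh k x t - smult (smult P T) Hh k x t"
        unfolding D_def by (rule smult_sub_l[OF ltTN lPT lH])
      also have "smult (smult P T) Hh k x t = smult P (smult T Hh) k x t"
        by (rule smult_assoc[OF lP lT lH])
      also have "\<dots> = smult P (sadd dT (smult Aa T)) k x t"
        by (rule smult_cong_pt[OF lP lP lTH lE1]) (simp_all add: E1[OF xt] sadd_def)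
      also have "\<dots> = smult P dT k x t + smult P (smult Aa T) k x t"
        by (rule smult_add_r[OF lP ldT1 lAT])
      finally show ?thesis .
    qed
    have d: "smult T (smult Hh M) k x t = smult dT M k x t + (smult Aa tT k x t - smult Aa (smult P T) k x t)"
    proof -
      have "smult T (smult Hh M) k x t = smult (smult T Hh) M k x t"
        by (rule smult_assoc[OF lT lH lM, symmetric])
      also have "\<dots> = smult (sadd dT (smult Aa T)) M k x t"
        by (rule smult_cong_pt[OF lTH lE1 lM lM]) (simp_all add: E1[OF xt] sadd_def)
      also have "\<dots> = smult dT M k x t + smult (smult Aa T) M k x t"
        by (rule smult_add_l[OF ldT1 lAT lM])
      also have "smult (smult Aa T) M k x t = smult Aa (smult T M) k x t"
        by (rule smult_assoc[OF lA lT lM])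
      also have "\<dots> = smult Aa D k x t"
        by (rule smult_cong_pt[OF lA lA lTM lD]) (simp_all add: E2[OF xt])
      also have "\<dots> = smult Aa tT k x t - smult Aa (smult P T) k x t"
        unfolding D_def by (rule smult_sub_r[OF lA ltTN lPT])
      finally show ?thesis .
    qed
    have e: "sdS None dT k x t = sdS (Some a) tT k x t"
      using sd_comm[OF O mT xt, of None "Some a"] by (simp add: sdS_def dT_def tT_def)
    have f: "smult (sdS None Aa) T k x t = smult P (smult Aa T) k x t - smult Aa (smult P T) k x t - smult (sdS (Some a) P) T k x t"
    proof -
      have "smult (sdS None Aa) T k x t = smult (ssub (ssub (smult P Aa) (smult Aa P)) (sdS (Some a) P)) T k x t"
        by (rule smult_cong_pt[OF ltAL lb_ssub[OF lb_ssub[OF lPA lAP] ldPL] lT lT])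
           (simp_all add: evol[OF xt] ssub_def scomm_def)
      also have "\<dots> = smult (ssub (smult P Aa) (smult Aa P)) T k x t - smult (sdS (Some a) P) T k x t"
        by (rule smult_sub_l[OF lb_ssub[OF lPA lAP] ldPL lT])
      also have "smult (ssub (smult P Aa) (smult Aa P)) T k x t = smult (smult P Aa) T k x t - smult (smult Aa P) T k x t"
        by (rule smult_sub_l[OF lPA lAP lT])
      also have "smult (smult P Aa) T k x t = smult P (smult Aa T) k x t"
        by (rule smult_assoc[OF lP lA lT])
      also have "smult (smult Aa P) T k x t = smult Aa (smult P T) k x t"
        by (rule smult_assoc[OF lA lP lT])
      finally show ?thesis .
    qed
    have "smult T Es k x t = smult T (ssub (sdS None Hh) (sdS (Some a) M)) k x t + smult T (ssub (smult M Hh) (smult Hh M)) k x t"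
      unfolding Es_def by (rule smult_add_r[OF lT lb_ssub[OF ltHL ldML] lb_ssub[OF lMH lHM]])
    also have "\<dots> = (smult T (sdS None Hh) k x t - smult T (sdS (Some a) M) k x t) + (smult T (smult M Hh) k x t - smult T (smult Hh M) k x t)"
      by (simp add: smult_sub_r[OF lT ltHL ldML] smult_sub_r[OF lT lMH lHM])
    also have "\<dots> = 0"
    proof -
      have "smult tT Hh k x t + smult T (sdS None Hh) k x t = sdS None dT k x t + (smult (sdS None Aa) T k x t + smult Aa tT k x t)"
        using a1 a2 by simp
      then have A1: "smult T (sdS None Hh) k x t = sdS None dT k x t + (smult (sdS None Aa) T k x t + smult Aa tT k x t) - smult tT Hh k x t"
        by (simp add: algebra_simps)
      have "smult dT M k x t + smult T (sdS (Some a) M) k x t = sdS (Some a) tT k x t - (smult (sdS (Some a) P) T k x t + smult P dT k x t)"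
        using b1 b2 by simp
      then have B1: "smult T (sdS (Some a) M) k x t = sdS (Some a) tT k x t - (smult (sdS (Some a) P) T k x t + smult P dT k x t) - smult dT M k x t"
        by (simp add: algebra_simps)
      show ?thesis by (simp only: A1 B1 c d e f) (simp add: algebra_simps)
    qed
    finally show ?thesis .
  qed
  show "sdS None Hh k x t - sdS (Some a) M k x t + scomm M Hh k x t = 0" if xt: "(x,t) \<in> \<Omega>" for k x t
  proof -
    have "Es k x t = smult sone Es k x t" by (rule smult_sone_l[OF lEs, symmetric])
    also have "\<dots> = smult (smult Ti T) Es k x t"
      by (rule smult_cong_pt[OF lb_sone _ lEs lEs]) (use lb_smult[OF lTi lT] inv2[OF xt] in simp_all)
    also have "\<dots> = smult Ti (smult T Es) k x t" by (rule smult_assoc[OF lTi lT lEs])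
    also have "\<dots> = 0"
      by (rule smult_zero_r[OF lTi _ lb_smult[OF lT lEs]]) (rule G0[OF xt])
    finally show ?thesis by (simp add: Es_eq)
  qed
qed


lemma mult_diag_r: "diag_mat (H::complex^'n::finite^'n) \<Longrightarrow> (M ** H) $ i $ j = M $ i $ j * H $ j $ j"
proof -
  assume H: "diag_mat H"
  have "(M ** H) $ i $ j = (\<Sum>l\<in>UNIV. M $ i $ l * H $ l $ j)" by (simp add: matrix_matrix_mult_def)
  also have "\<dots> = (\<Sum>l\<in>UNIV. if l = j then M $ i $ j * H $ j $ j else 0)"
    by (rule sum.cong) (use H in \<open>auto simp: diag_mat_def\<close>)
  finally show ?thesis by simp
qed

lemma mult_diag_l: "diag_mat (H::complex^'n::finite^'n) \<Longrightarrow> (H ** M) $ i $ j = H $ i $ i * M $ i $ j"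
proof -
  assume H: "diag_mat H"
  have "(H ** M) $ i $ j = (\<Sum>l\<in>UNIV. H $ i $ l * M $ l $ j)" by (simp add: matrix_matrix_mult_def)
  also have "\<dots> = (\<Sum>l\<in>UNIV. if l = i then H $ i $ i * M $ i $ j else 0)"
    by (rule sum.cong) (use H in \<open>auto simp: diag_mat_def\<close>)
  finally show ?thesis by simp
qed

lemma diag_comm: "diag_mat (A::complex^'n::finite^'n) \<Longrightarrow> diag_mat B \<Longrightarrow> A ** B = B ** A"
proof -
  assume A: "diag_mat A" and B: "diag_mat B"
  have "(A ** B)$i$j = (B ** A)$i$j" for i j
    using mult_diag_r[OF B, of A i j] mult_diag_r[OF A, of B i j] A B
    by (cases "i = j") (auto simp: diag_mat_def)
  then show ?thesis by (simp add: vec_eq_iff)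
qed

lemma diag_neg: "diag_mat (A::complex^'n::finite^'n) \<Longrightarrow> diag_mat (- A)"
  by (simp add: diag_mat_def)

lemma smult_rev:
  assumes X: "lb X p" and Y: "lb Y q"
  shows "smult Y X k x t = (\<Sum>i\<in>{p..k-q}. Y (k-i) x t ** X i x t)"
proof -
  have "smult Y X k x t = (\<Sum>l\<in>(\<lambda>i. k - i) ` {p..k-q}. Y l x t ** X (k-l) x t)"
  proof (rule smult_win[OF Y X])
    show "finite ((\<lambda>i. k - i) ` {p..k-q})" by simp
    show "{q..k-p} \<subseteq> (\<lambda>i. k - i) ` {p..k-q}"
    proof
      fix l assume "l \<in> {q..k-p}"
      then have "k - l \<in> {p..k-q}" "l = k - (k - l)" by auto
      then show "l \<in> (\<lambda>i. k - i) ` {p..k-q}" by blast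
    qed
  qed
  also have "\<dots> = (\<Sum>i\<in>{p..k-q}. Y (k-i) x t ** X i x t)"
    by (subst sum.reindex) (auto simp: inj_on_def)
  finally show ?thesis .
qed

lemma scomm_win:
  assumes X: "lb X p" and Y: "lb Y q"
  shows "scomm X Y k x t = (\<Sum>i\<in>{p..k-q}. X i x t ** Y (k-i) x t - Y (k-i) x t ** X i x t)"
  unfolding scomm_def smult_win0[OF X Y] smult_rev[OF X Y] by (simp add: sum_subtractf)

lemma sd_diag:
  assumes O: "open \<Omega>" and xt: "(x,t) \<in> \<Omega>" and D: "\<And>x t. (x,t) \<in> \<Omega> \<Longrightarrow> diag_mat (f x t)"
  shows "diag_mat (sd d f x t)"
  unfolding diag_mat_def
proof (intro allI impI)
  fix i j :: 'a assume ij: "i \<noteq> j"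
  have "dd d (ent f i j) (x,t) = dd d (\<lambda>_. 0) (x,t)"
  proof (rule dd_cong[OF O xt])
    fix q assume "q \<in> \<Omega>"
    then show "ent f i j q = 0" using D[of "fst q" "snd q"] ij by (simp add: ent_def diag_mat_def)
  qed
  then show "sd d f x t $ i $ j = 0" by (simp add: sd_def dd_const)
qed

lemma mholo_neg:
  assumes f: "mholo_on \<Omega> f" shows "mholo_on \<Omega> (\<lambda>x t. - f x t)"
proof -
  have "mholo_on \<Omega> (\<lambda>x t. 0 - f x t)" by (rule mholo_diff[OF mholo_const f])
  then show ?thesis by simp
qed

lemma sd_neg:
  assumes f: "mholo_on \<Omega> f" and xt: "(x,t) \<in> \<Omega>" shows "sd d (\<lambda>x t. - f x t) x t = - sd d f x t"
proof -
  have "sd d (\<lambda>x t. 0 - f x t) x t = sd d (\<lambda>x t. 0) x t - sd d f x t" by (rule sd_diff[OF mholo_const f xt])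
  then show ?thesis by (simp add: sd_zero)
qed

theorem mainTheorem8:
  fixes \<Omega> :: "((complex^'n) \<times> complex) set"
    and C :: "'n \<Rightarrow> 'n mfun"
    and b :: "int \<Rightarrow> complex^'n^'n"
    and T Ti :: "'n ser"
    and h :: "'n \<Rightarrow> 'n ser"
  defines "A \<equiv> \<lambda>a k. if k = -1 then (\<lambda>x t. - C a x t) else (\<lambda>x t. 0)"
    and "P \<equiv> \<lambda>k. if k \<le> -1 then smult (smult T (\<lambda>j x t. b j)) Ti k else (\<lambda>x t. 0)"
  assumes Omega: "open \<Omega>"
    and C_holo: "\<forall>a. mholo_on \<Omega> (C a)"
    and commute: "\<forall>a c k. \<forall>(x,t)\<in>\<Omega>. conn_comm a (A a) c (A c) k x t = 0"
    and b_diag: "\<forall>k. diag_mat (b k)"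
    and b_poly: "\<forall>k>0. b k = 0" "\<exists>N. \<forall>k<N. b k = 0"
    and evolution: "\<forall>a k. \<forall>(x,t)\<in>\<Omega>. spt (A a) k x t = scomm P (A a) k x t - spx a P k x t"
    and T_pow: "\<forall>k<0. T k = (\<lambda>_ _. 0)" "\<forall>k<0. Ti k = (\<lambda>_ _. 0)"
    and T_holo: "\<forall>k. mholo_on \<Omega> (T k)" "\<forall>k. mholo_on \<Omega> (Ti k)"
    and T_inv: "\<forall>k. \<forall>(x,t)\<in>\<Omega>. smult T Ti k x t = sone k x t"
               "\<forall>k. \<forall>(x,t)\<in>\<Omega>. smult Ti T k x t = sone k x t"
    and dressing: "\<forall>a k. \<forall>(x,t)\<in>\<Omega>.
                     smult Ti (spx a T) k x t + smult (smult Ti (A a)) T k x t = h a k x t"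
    and h_low: "\<forall>a k. k < -1 \<longrightarrow> h a k = (\<lambda>_ _. 0)"
    and h_diag: "\<forall>a k. \<forall>(x,t)\<in>\<Omega>. diag_mat (h a k x t)"
    and h_span: "\<forall>(x,t)\<in>\<Omega>. \<forall>D. diag_mat D \<longrightarrow>
                   (\<exists>c. D = (\<Sum>a\<in>UNIV. cscale (c a) (h a (-1) x t)))"
  shows "\<forall>k. \<exists>B :: 'n mfun. mholo_on \<Omega> B \<and> (\<forall>(x,t)\<in>\<Omega>. diag_mat (B x t)) \<and>
           (\<forall>a. \<forall>(x,t)\<in>\<Omega>. pt (h a k) x t + px a B x t = 0)"
proof -
  have O: "open \<Omega>" by (rule Omega)
  obtain N0 where N0: "\<forall>k<N0. b k = 0" using b_poly(2) by blast
  define N where "N = min N0 0"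
  have N: "N \<le> 0" by (simp add: N_def)
  have bN: "b k = 0" if "k < N" for k using N0 that by (auto simp: N_def)
  define Bs where "Bs = (\<lambda>(j::int) (x::complex^'n) (t::complex). b j)"
  have lB: "lb Bs N" using bN by (simp add: lb_def Bs_def fun_eq_iff)
  have hB: "HO \<Omega> Bs" by (simp add: HO_def Bs_def mholo_const)
  have lT: "lb T 0" and lTi: "lb Ti 0" using T_pow by (auto simp: lb_def)
  have hT: "HO \<Omega> T" and hTi: "HO \<Omega> Ti" using T_holo by (auto simp: HO_def)
  have lA: "lb (A a) (-1)" for a by (simp add: lb_def A_def)
  have hA: "HO \<Omega> (A a)" for a
  proof -
    have "mholo_on \<Omega> (\<lambda>x t. - C a x t)" using mholo_neg C_holo by blast
    then show ?thesis by (simp add: HO_def A_def mholo_const)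
  qed
  define Q where "Q = smult (smult T Bs) Ti"
  have PQ: "P = (\<lambda>k. if k \<le> -1 then Q k else (\<lambda>x t. 0))" unfolding P_def Q_def Bs_def by (rule refl)
  have lTB: "lb (smult T Bs) N" using lb_smult[OF lT lB] by simp
  have lQ: "lb Q N" using lb_smult[OF lTB lTi] by (simp add: Q_def)
  have lP: "lb P N" using lQ N unfolding PQ by (auto simp: lb_def)
  have hQ: "HO \<Omega> Q" unfolding Q_def by (rule HO_smult[OF HO_smult[OF hT hB lT lB] hTi lTB lTi])
  have hP: "HO \<Omega> P" using hQ unfolding PQ by (auto simp: HO_def mholo_const)
  have lH: "lb (h a) (-1)" for a using h_low by (simp add: lb_def)
  define M where "M = smult Ti (ssub (sdS None T) (smult P T))"
  have inv1: "\<And>k x t. (x,t) \<in> \<Omega> \<Longrightarrow> smult T Ti k x t = sone k x t" using T_inv(1) by auto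
  have inv2: "\<And>k x t. (x,t) \<in> \<Omega> \<Longrightarrow> smult Ti T k x t = sone k x t" using T_inv(2) by auto
  have dress: "smult Ti (sdS (Some a) T) k x t + smult (smult Ti (A a)) T k x t = h a k x t" if xt: "(x,t) \<in> \<Omega>" for a k x t
  proof -
    have "\<forall>(x,t)\<in>\<Omega>. smult Ti (spx a T) k x t + smult (smult Ti (A a)) T k x t = h a k x t"
      using dressing by blast
    then show ?thesis using xt by (auto simp: spx_sdS)
  qed
  have evol: "sdS None (A a) k x t = scomm P (A a) k x t - sdS (Some a) P k x t" if xt: "(x,t) \<in> \<Omega>" for a k x t
  proof -
    have "\<forall>(x,t)\<in>\<Omega>. spt (A a) k x t = scomm P (A a) k x t - spx a P k x t"
      using evolution by blast
    then show ?thesis using xt by (auto simp: spx_sdS spt_sdS)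
  qed
  have KI: "sdS None (h a) k x t - sdS (Some a) M k x t + scomm M (h a) k x t = 0" if xt: "(x,t) \<in> \<Omega>" for a k x t
    by (rule key_identity[OF O lT lTi lP lA lH N hT hTi hP hA inv1 inv2 dress[where a=a] evol[where a=a] M_def xt])
  have lM: "lb M N"
  proof -
    have "lb (ssub (sdS None T) (smult P T)) N"
      by (rule lb_ssub[OF lb_mono[OF lb_sdS[OF lT] N]]) (use lb_smult[OF lP lT] in simp)
    then show ?thesis using lb_smult[OF lTi] by (simp add: M_def)
  qed
  have hM: "HO \<Omega> M"
    unfolding M_def
    by (rule HO_smult[OF hTi HO_ssub[OF HO_sdS[OF O hT] HO_smult[OF hP hT lP lT]] lTi
            lb_ssub[OF lb_mono[OF lb_sdS[OF lT] N]]]) (use lb_smult[OF lP lT] in simp)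
  have hh: "diag_mat (h a k x t)" if xt: "(x,t) \<in> \<Omega>" for a k x t
  proof -
    have "\<forall>(x,t)\<in>\<Omega>. diag_mat (h a k x t)" using h_diag by blast
    then show ?thesis using xt by auto
  qed
  have step: "diag_mat (M m x t)"
    if IH: "\<And>i x t. i < m \<Longrightarrow> (x,t) \<in> \<Omega> \<Longrightarrow> diag_mat (M i x t)" and xt: "(x,t) \<in> \<Omega>" for m x t
  proof (cases "m < N")
    case True
    then show ?thesis using lM by (simp add: lb_def diag_mat_def)
  next
    case False
    have off: "M m x t $ i $ j * (h a (-1) x t $ j $ j - h a (-1) x t $ i $ i) = 0" if ij: "i \<noteq> j" for a i j
    proof -
      have K: "sdS None (h a) (m-1) x t - sdS (Some a) M (m-1) x t + scomm M (h a) (m-1) x t = 0"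
        by (rule KI[OF xt])
      have d1: "sdS None (h a) (m-1) x t $ i $ j = 0"
        using sd_diag[OF O xt, of "h a (m-1)" None] hh ij by (auto simp: sdS_def diag_mat_def)
      have d2: "sdS (Some a) M (m-1) x t $ i $ j = 0"
        using sd_diag[OF O xt, of "M (m-1)" "Some a"] IH[where i="m-1"] ij by (auto simp: sdS_def diag_mat_def)
      have "scomm M (h a) (m-1) x t = (\<Sum>l\<in>{N..m}. M l x t ** h a (m-1-l) x t - h a (m-1-l) x t ** M l x t)"
        using scomm_win[OF lM lH[where a=a], where k="m-1" and x=x and t=t] by simp
      then have "scomm M (h a) (m-1) x t $ i $ j
          = (\<Sum>l\<in>{N..m}. M l x t $ i $ j * h a (m-1-l) x t $ j $ j - h a (m-1-l) x t $ i $ i * M l x t $ i $ j)"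
        by (simp add: sum_component mult_diag_r[OF hh[OF xt]] mult_diag_l[OF hh[OF xt]])
      also have "\<dots> = (\<Sum>l\<in>{N..m}. if l = m then M m x t $ i $ j * (h a (-1) x t $ j $ j - h a (-1) x t $ i $ i) else 0)"
      proof (rule sum.cong[OF refl])
        fix l assume l: "l \<in> {N..m}"
        show "M l x t $ i $ j * h a (m-1-l) x t $ j $ j - h a (m-1-l) x t $ i $ i * M l x t $ i $ j
          = (if l = m then M m x t $ i $ j * (h a (-1) x t $ j $ j - h a (-1) x t $ i $ i) else 0)"
        proof (cases "l = m")
          case True then show ?thesis by (simp add: algebra_simps)
        next
          case False
          then have "l < m" using l by auto
          then have "M l x t $ i $ j = 0" using IH[OF _ xt] ij by (auto simp: diag_mat_def)
          then show ?thesis using False by simp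
        qed
      qed
      also have "\<dots> = M m x t $ i $ j * (h a (-1) x t $ j $ j - h a (-1) x t $ i $ i)"
        using False by simp
      finally have "scomm M (h a) (m-1) x t $ i $ j = M m x t $ i $ j * (h a (-1) x t $ j $ j - h a (-1) x t $ i $ i)" .
      moreover have "(sdS None (h a) (m-1) x t - sdS (Some a) M (m-1) x t + scomm M (h a) (m-1) x t) $ i $ j = 0"
        using K by simp
      ultimately show ?thesis using d1 d2 by simp
    qed
    show ?thesis unfolding diag_mat_def
    proof (intro allI impI)
      fix i j :: 'n assume ij: "i \<noteq> j"
      define E :: "complex^'n^'n" where "E = (\<chi> r s. if r = j \<and> s = j then 1 else 0)"
      have "diag_mat E" by (simp add: E_def diag_mat_def)
      then obtain c where c: "E = (\<Sum>a\<in>UNIV. cscale (c a) (h a (-1) x t))"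
        using h_span xt by blast
      have Ed: "E $ r $ r = (\<Sum>a\<in>UNIV. c a * h a (-1) x t $ r $ r)" for r
        by (simp add: c sum_component cscale_def)
      have "1 = E $ j $ j - E $ i $ i" using ij by (simp add: E_def)
      also have "\<dots> = (\<Sum>a\<in>UNIV. c a * (h a (-1) x t $ j $ j - h a (-1) x t $ i $ i))"
        by (simp add: Ed sum_subtractf algebra_simps)
      finally have one: "1 = (\<Sum>a\<in>UNIV. c a * (h a (-1) x t $ j $ j - h a (-1) x t $ i $ i))" .
      have "M m x t $ i $ j = M m x t $ i $ j * 1" by simp
      also have "\<dots> = (\<Sum>a\<in>UNIV. c a * (M m x t $ i $ j * (h a (-1) x t $ j $ j - h a (-1) x t $ i $ i)))"
        by (subst one) (simp add: sum_distrib_left algebra_simps)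
      also have "\<dots> = 0" by (intro sum.neutral ballI) (simp only: off[OF ij] mult_zero_right)
      finally show "M m x t $ i $ j = 0" .
    qed
  qed
  have Mdiag: "diag_mat (M m x t)" if xt: "(x,t) \<in> \<Omega>" for m x t
  proof -
    have "\<forall>m x t. m < N + int d \<longrightarrow> (x,t) \<in> \<Omega> \<longrightarrow> diag_mat (M m x t)" for d :: nat
    proof (induction d)
      case 0 then show ?case using lM by (auto simp: lb_def diag_mat_def)
    next
      case (Suc d)
      show ?case
      proof (intro allI impI)
        fix m x t assume m: "m < N + int (Suc d)" and xt: "(x,t) \<in> \<Omega>"
        show "diag_mat (M m x t)"
        proof (rule step[OF _ xt])
          fix i x t assume "i < m" "(x,t) \<in> \<Omega>"
          then show "diag_mat (M i x t)" using Suc.IH m by auto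
        qed
      qed
    qed
    then have "m < N + int (nat (m - N + 1)) \<longrightarrow> (x,t) \<in> \<Omega> \<longrightarrow> diag_mat (M m x t)" by blast
    moreover have "m < N + int (nat (m - N + 1))" by (cases "m - N + 1 \<ge> 0") auto
    ultimately show ?thesis using xt by blast
  qed
  show ?thesis
  proof
    fix k
    define B where "B = (\<lambda>x t. - M k x t)"
    have mM: "mholo_on \<Omega> (M k)" using hM by (simp add: HO_def)
    show "\<exists>B :: 'n mfun. mholo_on \<Omega> B \<and> (\<forall>(x,t)\<in>\<Omega>. diag_mat (B x t)) \<and>
           (\<forall>a. \<forall>(x,t)\<in>\<Omega>. pt (h a k) x t + px a B x t = 0)"
    proof (intro exI conjI)
      show "mholo_on \<Omega> B" unfolding B_def by (rule mholo_neg[OF mM])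
      show "\<forall>(x,t)\<in>\<Omega>. diag_mat (B x t)" by (auto simp: B_def intro!: diag_neg Mdiag)
      show "\<forall>a. \<forall>(x,t)\<in>\<Omega>. pt (h a k) x t + px a B x t = 0"
      proof (intro allI ballI, clarify)
        fix a x t assume xt: "(x,t) \<in> \<Omega>"
        have sc: "scomm M (h a) k x t = 0"
        proof -
          have "scomm M (h a) k x t = (\<Sum>l\<in>{N..k+1}. M l x t ** h a (k-l) x t - h a (k-l) x t ** M l x t)"
            using scomm_win[OF lM lH[where a=a], where k=k and x=x and t=t] by simp
          also have "\<dots> = 0"
            by (rule sum.neutral) (simp add: diag_comm[OF Mdiag[OF xt] hh[OF xt]])
          finally show ?thesis .
        qed
        have "px a B x t = - sdS (Some a) M k x t"
          unfolding B_def px_sd sdS_def by (rule sd_neg[OF mM xt])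
        moreover have "pt (h a k) x t = sdS None (h a) k x t" by (simp add: pt_sd sdS_def)
        ultimately show "pt (h a k) x t + px a B x t = 0" using KI[OF xt, where a=a and k=k] sc by simp
      qed
    qed
  qed
qed


end
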